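(* In the FAVANO process described in the context, for every time step $t\ge 0$, $$\mathbb{E}[\Phi_{t+1}]\le(1-\kappa)\,\mathbb{E}[\Phi_t]+3\frac{s^2}{n}\eta^2\sum_{i=1}^n\mathbb{E}\big\|\check h^i_{t+1}\big\|^2,\qquad \kappa=\frac{1}{n}\cdot\frac{s(n-s)}{2(n+1)(s+1)} .$$
   Context: FAVANO process. Fix integers $n\ge1$, $1\le s\le n$, $K\ge1$, $d\ge1$, a step size $\eta>0$ and differentiable $f_1,\dots,f_n:\mathbb{R}^d\to\mathbb{R}$, $f=\frac1n\sum_i f_i$. All random variables live on one probability space. For each client $i$ a stochastic gradient oracle returns, at a query point $x$, $\widetilde g^i(x)=\nabla f_i(x)+\xi$ where, conditionally on everything generated before the query (including $x$), $\xi$ has mean zero (each query uses fresh noise). Initialize $w_0\in\mathbb{R}^d$ deterministic and $w_0^i=w_0$ for all $i$. For each $t\ge1$, each client $i$ and each $q\ge1$ define recursively $\widetilde h^i_{t,q}=\widetilde g^i\big(w^i_{t-1}-\eta\sum_{r=1}^{q-1}\widetilde h^i_{t,r}\big)$ and $h^i_{t,q}=\nabla f_i\big(w^i_{t-1}-\eta\sum_{r=1}^{q-1}\widetilde h^i_{t,r}\big)$. At each $t\ge1$ there are random integers $E^1_t,\dots,E^n_t\ge0$ with $\mathbf{P}(E^i_t>0)>0$, and a random subset $\mathcal{S}_t\subseteq\{1,\dots,n\}$ uniformly distributed among subsets of size $s$; the family $(\mathcal S_t,E^1_t,\dots,E^n_t)$ is independent of all the other randomness (the past up to time $t-1$ and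 all $\widetilde h^i_{t,q}$), and $\mathcal S_t$ is independent of $(E^i_t)_i$. The weight $\alpha^i_t$ is either $\mathbf{P}(E^i_t>0)\,(E^i_t\wedge K)$ (stochastic version) or $\mathbb{E}[E^i_t\wedge K]$ (deterministic version), where $a\wedge b=\min(a,b)$. Set $\check h^i_t=\frac{1}{\alpha^i_t}\sum_{q=1}^{E^i_t\wedge K}\widetilde h^i_{t,q}$ if $E^i_t>0$ and $\check h^i_t=0$ otherwise. Updates: $w_t=\frac{1}{s+1}\big(w_{t-1}+\sum_{i\in\mathcal S_t}(w^i_{t-1}-\eta\check h^i_t)\big)$; $w^i_t=w_t$ for $i\in\mathcal S_t$ and $w^i_t=w^i_{t-1}$ for $i\notin\mathcal S_t$. Define $\mu_t=\frac{1}{n+1}\big(w_t+\sum_{i=1}^n w^i_t\big)$ and $\Phi_t=\|w_t-\mu_t\|^2+\sum_{i=1}^n\|w^i_t-\mu_t\|^2$. All expectations appearing are assumed finite. *)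

theory Defs
  imports "HOL-Probability.Probability"
begin

(* Query points of the local stochastic-gradient loop of one client in one round.
   qpoint g z eta x m is the point at which the (m+1)-th oracle query is made:
   x - eta * sum_{r=1}^{m} htil_r, where htil_r = g(qpoint (r-1)) + z r. *)
fun qpoint :: "('v::euclidean_space \<Rightarrow> 'v) \<Rightarrow> (nat \<Rightarrow> 'v) \<Rightarrow> real \<Rightarrow> 'v \<Rightarrow> nat \<Rightarrow> 'v" where
  "qpoint g z eta x 0 = x"
| "qpoint g z eta x (Suc m) = qpoint g z eta x m - eta *\<^sub>R (g (qpoint g z eta x m) + z (Suc m))"

(* htil_q (q \<ge> 1): oracle answer grad f_i(query point) + noise z q *)
definition htil :: "('v::euclidean_space \<Rightarrow> 'v) \<Rightarrow> (nat \<Rightarrow> 'v) \<Rightarrow> real \<Rightarrow> 'v \<Rightarrow> nat \<Rightarrow> 'v" where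
  "htil g z eta x q = g (qpoint g z eta x (q - 1)) + z q"

definition fav_alpha :: "'a measure \<Rightarrow> bool \<Rightarrow> nat \<Rightarrow> (nat \<Rightarrow> nat \<Rightarrow> 'a \<Rightarrow> nat) \<Rightarrow> nat \<Rightarrow> nat \<Rightarrow> 'a \<Rightarrow> real" where
  "fav_alpha M stoch K E t i \<omega> =
     (if stoch then measure M {\<omega>'\<in>space M. 0 < E t i \<omega>'} * real (min (E t i \<omega>) K)
      else integral\<^sup>L M (\<lambda>\<omega>'. real (min (E t i \<omega>') K)))"

(* check-h^i_t computed from the local models ws = (w^i_{t-1})_i *)
definition hchk_from :: "(nat \<Rightarrow> 'v::euclidean_space \<Rightarrow> 'v) \<Rightarrow> (nat \<Rightarrow> nat \<Rightarrow> nat \<Rightarrow> 'a \<Rightarrow> 'v)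
   \<Rightarrow> (nat \<Rightarrow> nat \<Rightarrow> 'a \<Rightarrow> nat) \<Rightarrow> (nat \<Rightarrow> nat \<Rightarrow> 'a \<Rightarrow> real) \<Rightarrow> nat \<Rightarrow> real
   \<Rightarrow> nat \<Rightarrow> (nat \<Rightarrow> 'v) \<Rightarrow> 'a \<Rightarrow> nat \<Rightarrow> 'v" where
  "hchk_from grad xi E alpha K eta t ws \<omega> i =
     (if 0 < E t i \<omega>
      then inverse (alpha t i \<omega>) *\<^sub>R
             (\<Sum>q\<in>{1..min (E t i \<omega>) K}. htil (grad i) (\<lambda>q. xi t i q \<omega>) eta (ws i) q)
      else 0)"

(* state (w_t, (w^i_t)_i) of the FAVANO process *)
fun fav_state :: "nat \<Rightarrow> nat \<Rightarrow> real \<Rightarrow> (nat \<Rightarrow> 'v::euclidean_space \<Rightarrow> 'v) \<Rightarrow> 'v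
   \<Rightarrow> (nat \<Rightarrow> 'a \<Rightarrow> nat set) \<Rightarrow> (nat \<Rightarrow> nat \<Rightarrow> 'a \<Rightarrow> nat) \<Rightarrow> (nat \<Rightarrow> nat \<Rightarrow> nat \<Rightarrow> 'a \<Rightarrow> 'v)
   \<Rightarrow> (nat \<Rightarrow> nat \<Rightarrow> 'a \<Rightarrow> real) \<Rightarrow> nat \<Rightarrow> 'a \<Rightarrow> 'v \<times> (nat \<Rightarrow> 'v)" where
  "fav_state s K eta grad w0 S E xi alpha 0 \<omega> = (w0, \<lambda>i. w0)"
| "fav_state s K eta grad w0 S E xi alpha (Suc t) \<omega> =
     (let w = fst (fav_state s K eta grad w0 S E xi alpha t \<omega>);
          ws = snd (fav_state s K eta grad w0 S E xi alpha t \<omega>);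
          h = hchk_from grad xi E alpha K eta (Suc t) ws \<omega>;
          wn = (1 / (real s + 1)) *\<^sub>R (w + (\<Sum>i\<in>S (Suc t) \<omega>. ws i - eta *\<^sub>R h i))
      in (wn, \<lambda>i. if i \<in> S (Suc t) \<omega> then wn else ws i))"

(* check-h^i_t for t \<ge> 1 *)
definition fav_hchk where
  "fav_hchk s K eta grad w0 S E xi alpha t i \<omega> =
     hchk_from grad xi E alpha K eta t (snd (fav_state s K eta grad w0 S E xi alpha (t - 1) \<omega>)) \<omega> i"

definition fav_mu where
  "fav_mu n s K eta grad w0 S E xi alpha t \<omega> =
     (let st = fav_state s K eta grad w0 S E xi alpha t \<omega> in
       (1 / (real n + 1)) *\<^sub>R (fst st + (\<Sum>i<n. snd st i)))"

definition fav_Phi where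
  "fav_Phi n s K eta grad w0 S E xi alpha t \<omega> =
     (let st = fav_state s K eta grad w0 S E xi alpha t \<omega>;
          mu = fav_mu n s K eta grad w0 S E xi alpha t \<omega> in
       (norm (fst st - mu))\<^sup>2 + (\<Sum>i<n. (norm (snd st i - mu))\<^sup>2))"

definition ev_S :: "'a measure \<Rightarrow> (nat \<Rightarrow> 'a \<Rightarrow> nat set) \<Rightarrow> nat set \<Rightarrow> 'a set set" where
  "ev_S M S T = {S t -` A \<inter> space M | t A. t \<in> T}"

definition ev_E :: "'a measure \<Rightarrow> (nat \<Rightarrow> nat \<Rightarrow> 'a \<Rightarrow> nat) \<Rightarrow> nat set \<Rightarrow> nat set \<Rightarrow> 'a set set" where
  "ev_E M E T I = {E t i -` A \<inter> space M | t i A. t \<in> T \<and> i \<in> I}"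

definition ev_xi :: "'a measure \<Rightarrow> (nat \<Rightarrow> nat \<Rightarrow> nat \<Rightarrow> 'a \<Rightarrow> 'v::euclidean_space) \<Rightarrow> nat set \<Rightarrow> nat set \<Rightarrow> nat set \<Rightarrow> 'a set set" where
  "ev_xi M xi T I Q = {xi t i q -` B \<inter> space M | t i q B. t \<in> T \<and> i \<in> I \<and> q \<in> Q \<and> B \<in> sets borel}"

definition past_ev where
  "past_ev M n S E xi t = ev_S M S {1..t} \<union> ev_E M E {1..t} {..<n} \<union> ev_xi M xi {1..t} {..<n} {1..}"

end

theory Submission
  imports Defs
begin


lemma young_norm:
  fixes x y :: "'v::real_inner"
  assumes e: "0 < e"
  shows "(norm (x + y))\<^sup>2 \<le> (1 + e) * (norm x)\<^sup>2 + (1 + 1/e) * (norm y)\<^sup>2"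
proof -
  have "2 * (x \<bullet> y) \<le> e * (norm x)\<^sup>2 + (1/e) * (norm y)\<^sup>2"
  proof -
    have gen: "(norm (a *\<^sub>R x - b *\<^sub>R y))\<^sup>2 = a\<^sup>2 * (x \<bullet> x) - 2*(a*b)*(x \<bullet> y) + b\<^sup>2*(y \<bullet> y)" for a b
      unfolding power2_norm_eq_inner by (simp add: inner_diff_left inner_diff_right inner_commute algebra_simps power2_eq_square)
    have "0 \<le> (norm (sqrt e *\<^sub>R x - (1/sqrt e) *\<^sub>R y))\<^sup>2" by simp
    also have "\<dots> = e * (x \<bullet> x) - 2*(x \<bullet> y) + (1/e) * (y \<bullet> y)"
      unfolding gen using e by (simp add: power_divide)
    finally show ?thesis by (simp add: power2_norm_eq_inner)
  qed
  then show ?thesis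
    by (simp add: power2_norm_eq_inner inner_add_left inner_add_right inner_commute algebra_simps)
qed

lemma norm_sum_sq_le:
  fixes v :: "'i \<Rightarrow> 'v::real_inner"
  assumes "finite A"
  shows "(norm (\<Sum>i\<in>A. v i))\<^sup>2 \<le> real (card A) * (\<Sum>i\<in>A. (norm (v i))\<^sup>2)"
proof -
  have "(norm (\<Sum>i\<in>A. v i))\<^sup>2 \<le> (\<Sum>i\<in>A. norm (v i))\<^sup>2"
    by (simp add: norm_sum power_mono)
  also have "\<dots> \<le> real (card A) * (\<Sum>i\<in>A. (norm (v i))\<^sup>2)"
    using assms
  proof -
    have "(\<Sum>i\<in>A. 1 * norm (v i))\<^sup>2 \<le> (\<Sum>i\<in>A. 1\<^sup>2) * (\<Sum>i\<in>A. (norm (v i))\<^sup>2)"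
      by (rule Cauchy_Schwarz_ineq_sum)
    then show ?thesis by simp
  qed
  finally show ?thesis .
qed

lemma norm_add_sq:
  fixes a e :: "'v::real_inner"
  shows "(norm (a + e))\<^sup>2 = (norm a)\<^sup>2 + 2 * (a \<bullet> e) + (norm e)\<^sup>2"
  unfolding power2_norm_eq_inner by (simp add: inner_add_left inner_add_right inner_commute)

lemma var_decomp:
  fixes w c :: "'v::real_inner" and f :: "nat \<Rightarrow> 'v"
  assumes I: "finite I" and m: "m = (1 / (real (card I) + 1)) *\<^sub>R (w + (\<Sum>i\<in>I. f i))"
  shows "(norm (w - c))\<^sup>2 + (\<Sum>i\<in>I. (norm (f i - c))\<^sup>2)
     = (norm (w - m))\<^sup>2 + (\<Sum>i\<in>I. (norm (f i - m))\<^sup>2) + (real (card I) + 1) * (norm (m - c))\<^sup>2"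
proof -
  define e where "e = m - c"
  have sum0: "(w - m) + (\<Sum>i\<in>I. f i - m) = 0"
  proof -
    have "(real (card I) + 1) *\<^sub>R m = w + (\<Sum>i\<in>I. f i)"
      unfolding m by simp
    then show ?thesis
      by (simp add: sum_subtractf algebra_simps scaleR_add_left sum_constant_scaleR)
  qed
  have "(norm (w - c))\<^sup>2 + (\<Sum>i\<in>I. (norm (f i - c))\<^sup>2)
      = (norm ((w - m) + e))\<^sup>2 + (\<Sum>i\<in>I. (norm ((f i - m) + e))\<^sup>2)"
    unfolding e_def by simp
  also have "\<dots> = (norm (w - m))\<^sup>2 + (\<Sum>i\<in>I. (norm (f i - m))\<^sup>2)
      + 2 * (((w - m) + (\<Sum>i\<in>I. f i - m)) \<bullet> e) + (real (card I) + 1) * (norm e)\<^sup>2"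
    unfolding norm_add_sq
    by (simp add: sum.distrib sum_subtractf inner_add_left inner_diff_left inner_sum_left sum_distrib_left algebra_simps)
  also have "\<dots> = (norm (w - m))\<^sup>2 + (\<Sum>i\<in>I. (norm (f i - m))\<^sup>2) + (real (card I) + 1) * (norm (m - c))\<^sup>2"
    unfolding sum0 e_def by simp
  finally show ?thesis .
qed

definition PhiOf :: "nat \<Rightarrow> 'v::real_inner \<times> (nat \<Rightarrow> 'v) \<Rightarrow> real" where
  "PhiOf n st = (let mu = (1 / (real n + 1)) *\<^sub>R (fst st + (\<Sum>i<n. snd st i)) in
     (norm (fst st - mu))\<^sup>2 + (\<Sum>i<n. (norm (snd st i - mu))\<^sup>2))"

definition upd :: "nat \<Rightarrow> real \<Rightarrow> nat set \<Rightarrow> 'v::real_inner \<times> (nat \<Rightarrow> 'v) \<Rightarrow> (nat \<Rightarrow> 'v) \<Rightarrow> 'v \<times> (nat \<Rightarrow> 'v)" where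
  "upd s eta A st h = (let wn = (1 / (real s + 1)) *\<^sub>R (fst st + (\<Sum>i\<in>A. snd st i - eta *\<^sub>R h i))
     in (wn, \<lambda>i. if i \<in> A then wn else snd st i))"

lemma PhiOf_le:
  fixes w c :: "'v::real_inner"
  shows "PhiOf n (w, z) \<le> (norm (w - c))\<^sup>2 + (\<Sum>i<n. (norm (z i - c))\<^sup>2)"
proof -
  have "(norm (w - c))\<^sup>2 + (\<Sum>i<n. (norm (z i - c))\<^sup>2) = PhiOf n (w, z)
     + (real (card {..<n}) + 1) * (norm ((1 / (real (card {..<n}) + 1)) *\<^sub>R (w + (\<Sum>i<n. z i)) - c))\<^sup>2"
    unfolding PhiOf_def Let_def using var_decomp[of "{..<n}" _ w z c] by simp
  moreover have "0 \<le> (real (card {..<n}) + 1) * (norm ((1 / (real (card {..<n}) + 1)) *\<^sub>R (w + (\<Sum>i<n. z i)) - c))\<^sup>2"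
    by simp
  ultimately show ?thesis by linarith
qed

lemma pointwise:
  fixes w :: "'v::real_inner" and ws h :: "nat \<Rightarrow> 'v"
  assumes A: "A \<subseteq> {..<n}" "card A = s" "1 \<le> s"
  defines "mu \<equiv> (1 / (real n + 1)) *\<^sub>R (w + (\<Sum>i<n. ws i))"
  shows "PhiOf n (upd s eta A (w, ws) h) \<le> PhiOf n (w, ws)
     - (1 / (real s + 1)) * (\<Sum>i\<in>A. (norm (w - ws i))\<^sup>2)
     + (1 / (2 * (real s + 1))) * ((norm (w - mu))\<^sup>2 + (\<Sum>i\<in>A. (norm (ws i - mu))\<^sup>2))
     + 3 * real s * eta\<^sup>2 * (\<Sum>i\<in>A. (norm (h i))\<^sup>2)"
proof -
  have finA: "finite A" using A(1) finite_subset by blast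
  define wn where "wn = (1 / (real s + 1)) *\<^sub>R (w + (\<Sum>i\<in>A. ws i - eta *\<^sub>R h i))"
  define mG where "mG = (1 / (real s + 1)) *\<^sub>R (w + (\<Sum>i\<in>A. ws i))"
  define d where "d = - (eta / (real s + 1)) *\<^sub>R (\<Sum>i\<in>A. h i)"
  define W where "W = (norm (w - mu))\<^sup>2 + (\<Sum>i\<in>A. (norm (ws i - mu))\<^sup>2)"
  define Dg where "Dg = (norm (w - mG))\<^sup>2 + (\<Sum>i\<in>A. (norm (ws i - mG))\<^sup>2)"
  define R where "R = (\<Sum>i\<in>{..<n} - A. (norm (ws i - mu))\<^sup>2)"
  define H where "H = (\<Sum>i\<in>A. (norm (h i))\<^sup>2)"
  define ep :: real where "ep = 1 / (2 * (real s + 1))"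
  have sp: "real s \<ge> 1" using A by simp
  have Phi: "PhiOf n (w, ws) = W + R"
  proof -
    have "(\<Sum>i<n. (norm (ws i - mu))\<^sup>2) = R + (\<Sum>i\<in>A. (norm (ws i - mu))\<^sup>2)"
      unfolding R_def using A(1) by (simp add: sum.subset_diff)
    moreover have "PhiOf n (w, ws) = (norm (w - mu))\<^sup>2 + (\<Sum>i<n. (norm (ws i - mu))\<^sup>2)"
      unfolding PhiOf_def Let_def mu_def by simp
    ultimately show ?thesis unfolding W_def by simp
  qed
  have S1: "PhiOf n (upd s eta A (w, ws) h) \<le> (real s + 1) * (norm (wn - mu))\<^sup>2 + R"
  proof -
    have "PhiOf n (upd s eta A (w, ws) h) \<le> (norm (wn - mu))\<^sup>2 + (\<Sum>i<n. (norm ((if i \<in> A then wn else ws i) - mu))\<^sup>2)"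
    proof -
      have U: "upd s eta A (w, ws) h = (wn, \<lambda>i. if i \<in> A then wn else ws i)"
        unfolding upd_def Let_def wn_def fst_conv snd_conv by simp
      show ?thesis unfolding U by (rule PhiOf_le)
    qed
    also have "(\<Sum>i<n. (norm ((if i \<in> A then wn else ws i) - mu))\<^sup>2)
        = (\<Sum>i\<in>{..<n} - A. (norm ((if i \<in> A then wn else ws i) - mu))\<^sup>2) + (\<Sum>i\<in>A. (norm ((if i \<in> A then wn else ws i) - mu))\<^sup>2)"
      using A(1) by (simp add: sum.subset_diff)
    also have "\<dots> = R + real s * (norm (wn - mu))\<^sup>2"
      unfolding R_def using A(2) by simp
    finally show ?thesis by (simp add: algebra_simps)
  qed
  have S3: "wn - mu = (mG - mu) + d"
  proof -
    have "(\<Sum>i\<in>A. ws i - eta *\<^sub>R h i) = (\<Sum>i\<in>A. ws i) - eta *\<^sub>R (\<Sum>i\<in>A. h i)"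
      by (simp add: sum_subtractf scaleR_sum_right)
    then have "wn = mG + d" unfolding wn_def mG_def d_def
      by (simp add: scaleR_add_right scaleR_diff_right scaleR_scaleR)
    then show ?thesis by simp
  qed
  have S4: "(norm (wn - mu))\<^sup>2 \<le> (1 + ep) * (norm (mG - mu))\<^sup>2 + (1 + 1/ep) * (norm d)\<^sup>2"
    unfolding S3 by (rule young_norm) (simp add: ep_def add_pos_pos)
  have S5: "W = Dg + (real s + 1) * (norm (mG - mu))\<^sup>2"
    unfolding W_def Dg_def using var_decomp[OF finA, of mG w ws mu] A(2) mG_def by simp
  have S6: "(1 / (real s + 1)) * (\<Sum>i\<in>A. (norm (w - ws i))\<^sup>2) \<le> Dg"
  proof -
    have "(norm (w - ws i))\<^sup>2 \<le> (1 + 1/real s) * (norm (w - mG))\<^sup>2 + (1 + 1/(1/real s)) * (norm (mG - ws i))\<^sup>2" for i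
      using young_norm[of "1/real s" "w - mG" "mG - ws i"] sp by simp
    then have "(\<Sum>i\<in>A. (norm (w - ws i))\<^sup>2) \<le> (\<Sum>i\<in>A. (1 + 1/real s) * (norm (w - mG))\<^sup>2 + (1 + real s) * (norm (ws i - mG))\<^sup>2)"
      by (intro sum_mono) (simp add: norm_minus_commute)
    also have "\<dots> = real s * (1 + 1/real s) * (norm (w - mG))\<^sup>2 + (1 + real s) * (\<Sum>i\<in>A. (norm (ws i - mG))\<^sup>2)"
      using A(2) by (simp add: sum.distrib sum_distrib_left)
    also have "\<dots> = (real s + 1) * Dg"
      unfolding Dg_def using sp by (simp add: algebra_simps)
    finally show ?thesis using sp by (simp add: field_simps)
  qed
  have S7: "(norm d)\<^sup>2 \<le> (eta / (real s + 1))\<^sup>2 * (real s * H)"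
  proof -
    have "(norm d)\<^sup>2 = (eta / (real s + 1))\<^sup>2 * (norm (\<Sum>i\<in>A. h i))\<^sup>2"
      unfolding d_def by (simp add: power_mult_distrib power_divide power2_abs)
    also have "\<dots> \<le> (eta / (real s + 1))\<^sup>2 * (real s * H)"
      unfolding H_def using norm_sum_sq_le[OF finA, of h] A(2) by (intro mult_left_mono) auto
    finally show ?thesis .
  qed
  have Dg0: "0 \<le> Dg" unfolding Dg_def by (intro add_nonneg_nonneg sum_nonneg) auto
  have H0: "0 \<le> H" unfolding H_def by (intro sum_nonneg) auto
  have T1: "(real s + 1) * ((1 + ep) * (norm (mG - mu))\<^sup>2) \<le> W - Dg + ep * W"
  proof -
    have "(real s + 1) * ((1 + ep) * (norm (mG - mu))\<^sup>2) = (1 + ep) * (W - Dg)"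
      using S5 by (simp add: algebra_simps)
    also have "\<dots> \<le> W - Dg + ep * W" using Dg0 by (simp add: ep_def algebra_simps divide_right_mono)
    finally show ?thesis .
  qed
  have T2: "(real s + 1) * ((1 + 1/ep) * (norm d)\<^sup>2) \<le> 3 * real s * eta\<^sup>2 * H"
  proof -
    have "(real s + 1) * ((1 + 1/ep) * (norm d)\<^sup>2) \<le> (real s + 1) * ((1 + 1/ep) * ((eta / (real s + 1))\<^sup>2 * (real s * H)))"
      using S7 by (intro mult_left_mono) (auto simp: ep_def)
    also have "\<dots> = ((2 * real s + 3) / (real s + 1)) * (real s * eta\<^sup>2 * H)"
    proof -
      have gen: "q * ((1 + 2*q) * ((eta/q)\<^sup>2 * (real s * H))) = ((2*q+1)/q) * (real s * eta\<^sup>2 * H)" if "q > 0" for q :: real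
        using that by (simp add: field_simps power2_eq_square)
      have "1 / ep = 2 * (real s + 1)" by (simp add: ep_def)
      then show ?thesis using gen[of "real s + 1"] by (simp add: algebra_simps)
    qed
    also have "\<dots> \<le> 3 * (real s * eta\<^sup>2 * H)"
      using sp H0 by (intro mult_right_mono) (auto simp: field_simps)
    finally show ?thesis by simp
  qed
  have "PhiOf n (upd s eta A (w, ws) h) \<le> (real s + 1) * ((1 + ep) * (norm (mG - mu))\<^sup>2 + (1 + 1/ep) * (norm d)\<^sup>2) + R"
    using S1 S4 by (smt (verit) mult_left_mono of_nat_0_le_iff)
  also have "\<dots> \<le> W - Dg + ep * W + 3 * real s * eta\<^sup>2 * H + R"
    using T1 T2 by (simp add: distrib_left)
  finally show ?thesis
    using S6 Phi unfolding W_def[symmetric] H_def[symmetric] ep_def by simp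
qed

definition Good :: "nat \<Rightarrow> nat \<Rightarrow> nat set set" where
  "Good n s = {A. A \<subseteq> {..<n} \<and> card A = s}"

lemma finite_Good: "finite (Good n s)"
  unfolding Good_def by (rule finite_subset[of _ "Pow {..<n}"]) auto

lemma card_Good: "card (Good n s) = n choose s"
  unfolding Good_def using n_subsets[of "{..<n}" s] by simp

lemma card_Good_mem:
  assumes i: "i < n" and s: "1 \<le> s"
  shows "card {A \<in> Good n s. i \<in> A} = (n - 1) choose (s - 1)"
proof -
  have "bij_betw (\<lambda>A. A - {i}) {A \<in> Good n s. i \<in> A} {B. B \<subseteq> {..<n} - {i} \<and> card B = s - 1}"
  proof (rule bij_betw_byWitness[where f'="insert i"])
    show "\<forall>a\<in>{A \<in> Good n s. i \<in> A}. insert i (a - {i}) = a" by auto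
    show "\<forall>a'\<in>{B. B \<subseteq> {..<n} - {i} \<and> card B = s - 1}. insert i a' - {i} = a'" by auto
    show "(\<lambda>A. A - {i}) ` {A \<in> Good n s. i \<in> A} \<subseteq> {B. B \<subseteq> {..<n} - {i} \<and> card B = s - 1}"
    proof safe
      fix A assume "A \<in> Good n s" "i \<in> A"
      then have "finite A" "A \<subseteq> {..<n}" "card A = s" unfolding Good_def using finite_subset by auto
      then show "card (A - {i}) = s - 1" using \<open>i \<in> A\<close> by simp
    qed (auto simp: Good_def)
    show "insert i ` {B. B \<subseteq> {..<n} - {i} \<and> card B = s - 1} \<subseteq> {A \<in> Good n s. i \<in> A}"
    proof safe
      fix B assume B: "B \<subseteq> {..<n} - {i}" "card B = s - 1"
      then have "finite B" using finite_subset by blast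
      moreover have "i \<notin> B" using B by auto
      ultimately show "insert i B \<in> Good n s" unfolding Good_def using B i s by auto
    qed
  qed
  then have "card {A \<in> Good n s. i \<in> A} = card {B. B \<subseteq> {..<n} - {i} \<and> card B = s - 1}"
    by (rule bij_betw_same_card)
  also have "\<dots> = card ({..<n} - {i}) choose (s - 1)" by (rule n_subsets) auto
  finally show ?thesis using i by simp
qed

lemma sum_Good_mem:
  fixes F :: "nat \<Rightarrow> real"
  assumes s: "1 \<le> s"
  shows "(\<Sum>A\<in>Good n s. \<Sum>i\<in>A. F i) = real ((n - 1) choose (s - 1)) * (\<Sum>i<n. F i)"
proof -
  have "(\<Sum>A\<in>Good n s. \<Sum>i\<in>A. F i) = (\<Sum>A\<in>Good n s. \<Sum>i<n. if i \<in> A then F i else 0)"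
  proof (rule sum.cong[OF refl])
    fix A assume "A \<in> Good n s"
    then have "A \<subseteq> {..<n}" unfolding Good_def by auto
    then show "(\<Sum>i\<in>A. F i) = (\<Sum>i<n. if i \<in> A then F i else 0)"
      by (simp add: sum.If_cases Int_absorb1 inf.absorb2)
  qed
  also have "\<dots> = (\<Sum>i<n. \<Sum>A\<in>Good n s. if i \<in> A then F i else 0)"
    by (rule sum.swap)
  also have "\<dots> = (\<Sum>i<n. real ((n - 1) choose (s - 1)) * F i)"
  proof (rule sum.cong[OF refl])
    fix i assume "i \<in> {..<n}"
    then have "(\<Sum>A\<in>Good n s. if i \<in> A then F i else 0) = real (card {A \<in> Good n s. i \<in> A}) * F i"
      using finite_Good by (simp add: sum.If_cases Int_def)
    then show "(\<Sum>A\<in>Good n s. if i \<in> A then F i else 0) = real ((n - 1) choose (s - 1)) * F i"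
      using card_Good_mem[of i n s] s \<open>i \<in> {..<n}\<close> by simp
  qed
  finally show ?thesis by (simp add: sum_distrib_left)
qed

lemma choose_ratio:
  assumes "1 \<le> s" "s \<le> n"
  shows "real ((n - 1) choose (s - 1)) = real (n choose s) * real s / real n"
proof -
  have "s * (n choose s) = n * ((n - 1) choose (s - 1))"
    using assms by (intro times_binomial_minus1_eq) auto
  then have "real s * real (n choose s) = real n * real ((n - 1) choose (s - 1))"
    by (metis of_nat_mult)
  then show ?thesis using assms by (simp add: field_simps)
qed

lemma coef_ineq:
  fixes n s U T :: real
  assumes n: "1 \<le> n" and s: "1 \<le> s" "s \<le> n" and U: "0 \<le> U" and T: "0 \<le> T"
  shows "(1 / n) * (s * (n - s)) / (2 * (n + 1) * (s + 1)) * (U + T)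
    \<le> (s * (n + 2) / (n * (s + 1)) - 1 / (2 * (s + 1))) * U + (s / (n * (s + 1)) - (1 / (2 * (s + 1))) * (s / n)) * T"
proof -
  have k1: "(1 / n) * (s * (n - s)) / (2 * (n + 1) * (s + 1)) \<le> s / (2 * n * (s + 1))"
  proof -
    have "(n - s) / (n + 1) \<le> 1" using n s by simp
    then have "(s / (2 * n * (s + 1))) * ((n - s) / (n + 1)) \<le> (s / (2 * n * (s + 1))) * 1"
      using n s by (intro mult_left_mono) auto
    then show ?thesis by (simp add: field_simps)
  qed
  have c1: "s / (2 * n * (s + 1)) \<le> s * (n + 2) / (n * (s + 1)) - 1 / (2 * (s + 1))"
  proof -
    have "1 * n \<le> s * n" using n s by (intro mult_right_mono) auto
    moreover have "2 * s * (n + 2) - n = 2 * (s * n) + 4 * s - n" by (simp add: algebra_simps)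
    ultimately have "s \<le> 2 * s * (n + 2) - n" using n s by linarith
    then have "s / (2 * n * (s + 1)) \<le> (2 * s * (n + 2) - n) / (2 * n * (s + 1))"
      using n s by (intro divide_right_mono) auto
    also have "\<dots> = s * (n + 2) / (n * (s + 1)) - 1 / (2 * (s + 1))"
    proof -
      have nz: "n \<noteq> 0" "s + 1 \<noteq> 0" using n s by auto
      have e1: "s * (n + 2) / (n * (s + 1)) = (2 * s * (n + 2)) / (2 * n * (s + 1))" by simp
      have e2: "1 / (2 * (s + 1)) = n / (2 * n * (s + 1))" using nz by simp
      show ?thesis unfolding e1 e2 by (simp add: diff_divide_distrib)
    qed
    finally show ?thesis .
  qed
  have c2: "s / (2 * n * (s + 1)) = s / (n * (s + 1)) - (1 / (2 * (s + 1))) * (s / n)"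
  proof -
    have nz: "n \<noteq> 0" "s + 1 \<noteq> 0" using n s by auto
    have e1: "s / (n * (s + 1)) = (2 * s) / (2 * n * (s + 1))" by simp
    have e2: "(1 / (2 * (s + 1))) * (s / n) = s / (2 * n * (s + 1))" by (simp add: ac_simps)
    show ?thesis unfolding e1 e2 by (simp add: diff_divide_distrib)
  qed
  have "(1 / n) * (s * (n - s)) / (2 * (n + 1) * (s + 1)) * (U + T) \<le> s / (2 * n * (s + 1)) * (U + T)"
    using k1 U T by (intro mult_right_mono) auto
  also have "\<dots> = s / (2 * n * (s + 1)) * U + s / (2 * n * (s + 1)) * T" by (rule distrib_left)
  also have "\<dots> \<le> (s * (n + 2) / (n * (s + 1)) - 1 / (2 * (s + 1))) * U + (s / (n * (s + 1)) - (1 / (2 * (s + 1))) * (s / n)) * T"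
    using c1 c2 U T by (intro add_mono mult_right_mono) auto
  finally show ?thesis .
qed

lemma avg_bound:
  fixes w :: "'v::real_inner" and ws h :: "nat \<Rightarrow> 'v"
  assumes n: "1 \<le> n" and s: "1 \<le> s" "s \<le> n"
  shows "(1 / real (n choose s)) * (\<Sum>A\<in>Good n s. PhiOf n (upd s eta A (w, ws) h))
    \<le> (1 - (1 / real n) * (real s * (real n - real s)) / (2 * (real n + 1) * (real s + 1))) * PhiOf n (w, ws)
       + 3 * (real s)\<^sup>2 / real n * eta\<^sup>2 * (\<Sum>i<n. (norm (h i))\<^sup>2)"
proof -
  define mu where "mu = (1 / (real n + 1)) *\<^sub>R (w + (\<Sum>i<n. ws i))"
  define C where "C = real (n choose s)"
  define Phi where "Phi = PhiOf n (w, ws)"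
  define U where "U = (norm (w - mu))\<^sup>2"
  define T where "T = (\<Sum>i<n. (norm (ws i - mu))\<^sup>2)"
  define X where "X = (\<Sum>i<n. (norm (w - ws i))\<^sup>2)"
  define Hs where "Hs = (\<Sum>i<n. (norm (h i))\<^sup>2)"
  define ep :: real where "ep = 1 / (2 * (real s + 1))"
  have Cpos: "C > 0" unfolding C_def using s by simp
  have C': "real ((n - 1) choose (s - 1)) = C * real s / real n"
    unfolding C_def by (rule choose_ratio) (use s in auto)
  have PhiUT: "Phi = U + T" unfolding Phi_def PhiOf_def Let_def U_def T_def mu_def by simp
  have X: "X = (real n + 2) * U + T"
  proof -
    have sum0: "(w - mu) + (\<Sum>i<n. ws i - mu) = 0"
    proof -
      have "(real n + 1) *\<^sub>R mu = w + (\<Sum>i<n. ws i)" unfolding mu_def by simp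
      then show ?thesis by (simp add: sum_subtractf algebra_simps scaleR_add_left sum_constant_scaleR)
    qed
    have "X = (\<Sum>i<n. (norm ((w - mu) + (- (ws i - mu))))\<^sup>2)" unfolding X_def by simp
    also have "\<dots> = (\<Sum>i<n. U - 2 * ((w - mu) \<bullet> (ws i - mu)) + (norm (ws i - mu))\<^sup>2)"
    proof -
      have aux: "(w - mu) \<bullet> (mu - ws i) = - ((w - mu) \<bullet> (ws i - mu))" for i by (simp add: inner_diff_right)
      show ?thesis unfolding norm_add_sq U_def by (simp add: aux norm_minus_commute)
    qed
    also have "\<dots> = real n * U - 2 * ((w - mu) \<bullet> (\<Sum>i<n. ws i - mu)) + T"
    proof -
      have "(\<Sum>i<n. 2 * ((w - mu) \<bullet> (ws i - mu))) = 2 * ((w - mu) \<bullet> (\<Sum>i<n. ws i - mu))"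
        by (simp only: inner_sum_right sum_distrib_left)
      then show ?thesis unfolding T_def by (simp add: sum.distrib sum_subtractf)
    qed
    also have "(\<Sum>i<n. ws i - mu) = - (w - mu)" using sum0 by (subst eq_neg_iff_add_eq_0) (simp add: add.commute)
    finally show ?thesis unfolding U_def by (simp add: power2_norm_eq_inner algebra_simps)
  qed
  have pw: "PhiOf n (upd s eta A (w, ws) h) \<le> Phi
     - (1 / (real s + 1)) * (\<Sum>i\<in>A. (norm (w - ws i))\<^sup>2)
     + ep * U + ep * (\<Sum>i\<in>A. (norm (ws i - mu))\<^sup>2)
     + 3 * real s * eta\<^sup>2 * (\<Sum>i\<in>A. (norm (h i))\<^sup>2)" if "A \<in> Good n s" for A
    using pointwise[where A=A and n=n and s=s and w=w and ws=ws and eta=eta and h=h] that s unfolding Good_def Phi_def ep_def U_def mu_def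
    by (simp add: distrib_left)
  have "(\<Sum>A\<in>Good n s. PhiOf n (upd s eta A (w, ws) h)) \<le> (\<Sum>A\<in>Good n s. Phi
     - (1 / (real s + 1)) * (\<Sum>i\<in>A. (norm (w - ws i))\<^sup>2)
     + ep * U + ep * (\<Sum>i\<in>A. (norm (ws i - mu))\<^sup>2)
     + 3 * real s * eta\<^sup>2 * (\<Sum>i\<in>A. (norm (h i))\<^sup>2))"
    by (rule sum_mono) (rule pw)
  also have "\<dots> = C * Phi - (1 / (real s + 1)) * (C * real s / real n) * X + C * ep * U
      + ep * (C * real s / real n) * T + 3 * real s * eta\<^sup>2 * (C * real s / real n) * Hs"
    unfolding sum.distrib sum_subtractf sum_distrib_left[symmetric] sum_Good_mem[OF s(1)] C'
    unfolding X_def T_def Hs_def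
    by (simp add: card_Good C_def algebra_simps)
  finally have main: "(\<Sum>A\<in>Good n s. PhiOf n (upd s eta A (w, ws) h)) \<le> C * Phi - (1 / (real s + 1)) * (C * real s / real n) * X + C * ep * U
      + ep * (C * real s / real n) * T + 3 * real s * eta\<^sup>2 * (C * real s / real n) * Hs" .
  have U0: "0 \<le> U" unfolding U_def by simp
  have T0: "0 \<le> T" unfolding T_def by (intro sum_nonneg) auto
  have ci: "(1 / real n) * (real s * (real n - real s)) / (2 * (real n + 1) * (real s + 1)) * (U + T)
    \<le> (real s * (real n + 2) / (real n * (real s + 1)) - 1 / (2 * (real s + 1))) * U + (real s / (real n * (real s + 1)) - (1 / (2 * (real s + 1))) * (real s / real n)) * T"
    by (rule coef_ineq) (use n s U0 T0 in auto)
  have "(1 / C) * (\<Sum>A\<in>Good n s. PhiOf n (upd s eta A (w, ws) h)) \<le> (1 / C) * (C * Phi - (1 / (real s + 1)) * (C * real s / real n) * X + C * ep * U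
      + ep * (C * real s / real n) * T + 3 * real s * eta\<^sup>2 * (C * real s / real n) * Hs)"
    using main Cpos by (intro mult_left_mono) auto
  also have "\<dots> = Phi - (real s / (real n * (real s + 1))) * X + ep * U + ep * (real s / real n) * T + 3 * (real s)\<^sup>2 / real n * eta\<^sup>2 * Hs"
    using Cpos n by (simp add: field_simps power2_eq_square)
  also have "\<dots> \<le> (1 - (1 / real n) * (real s * (real n - real s)) / (2 * (real n + 1) * (real s + 1))) * Phi + 3 * (real s)\<^sup>2 / real n * eta\<^sup>2 * Hs"
  proof -
    have "Phi - (real s / (real n * (real s + 1))) * X + ep * U + ep * (real s / real n) * T
      = Phi - ((real s * (real n + 2) / (real n * (real s + 1)) - 1 / (2 * (real s + 1))) * U + (real s / (real n * (real s + 1)) - (1 / (2 * (real s + 1))) * (real s / real n)) * T)"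
    proof -
      have nz: "real n \<noteq> 0" "real s + 1 \<noteq> 0" using n by auto
      define q where "q = real s + 1"
      have sq: "real s = q - 1" unfolding q_def by simp
      have qnz: "q \<noteq> 0" using nz q_def by simp
      show ?thesis unfolding X ep_def q_def[symmetric] sq using nz(1) qnz by (simp add: field_simps)
    qed
    then show ?thesis using ci PhiUT by (simp add: algebra_simps)
  qed
  finally show ?thesis unfolding C_def Phi_def Hs_def .
qed

lemma PhiOf_nonneg: "0 \<le> PhiOf n X"
  unfolding PhiOf_def Let_def by (intro add_nonneg_nonneg sum_nonneg) auto

lemma Z_bound:
  fixes X :: "'v::real_inner \<times> (nat \<Rightarrow> 'v)" and h :: "nat \<Rightarrow> 'v"
  assumes A: "A \<in> Good n s" and s: "1 \<le> s"
  shows "PhiOf n (upd s eta A X h) \<le> 2 * PhiOf n X + 3 * real s * eta\<^sup>2 * (\<Sum>i<n. (norm (h i))\<^sup>2)"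
proof -
  obtain w ws where X: "X = (w, ws)" by (cases X)
  have A1: "A \<subseteq> {..<n}" "card A = s" using A unfolding Good_def by auto
  define mu where "mu = (1 / (real n + 1)) *\<^sub>R (w + (\<Sum>i<n. ws i))"
  have pw: "PhiOf n (upd s eta A (w, ws) h) \<le> PhiOf n (w, ws)
     - (1 / (real s + 1)) * (\<Sum>i\<in>A. (norm (w - ws i))\<^sup>2)
     + (1 / (2 * (real s + 1))) * ((norm (w - mu))\<^sup>2 + (\<Sum>i\<in>A. (norm (ws i - mu))\<^sup>2))
     + 3 * real s * eta\<^sup>2 * (\<Sum>i\<in>A. (norm (h i))\<^sup>2)"
    unfolding mu_def by (rule pointwise[OF A1 s])
  have a: "0 \<le> (1 / (real s + 1)) * (\<Sum>i\<in>A. (norm (w - ws i))\<^sup>2)" by (simp add: sum_nonneg)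
  have b1: "(\<Sum>i\<in>A. (norm (ws i - mu))\<^sup>2) \<le> (\<Sum>i<n. (norm (ws i - mu))\<^sup>2)"
    using A1 by (intro sum_mono2) auto
  have b2: "(norm (w - mu))\<^sup>2 + (\<Sum>i<n. (norm (ws i - mu))\<^sup>2) = PhiOf n (w, ws)"
    unfolding PhiOf_def Let_def mu_def by simp
  have b3: "(1 / (2 * (real s + 1))) * ((norm (w - mu))\<^sup>2 + (\<Sum>i\<in>A. (norm (ws i - mu))\<^sup>2)) \<le> PhiOf n (w, ws)"
  proof -
    have "(1 / (2 * (real s + 1))) * ((norm (w - mu))\<^sup>2 + (\<Sum>i\<in>A. (norm (ws i - mu))\<^sup>2))
        \<le> 1 * ((norm (w - mu))\<^sup>2 + (\<Sum>i\<in>A. (norm (ws i - mu))\<^sup>2))"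
      by (intro mult_right_mono add_nonneg_nonneg sum_nonneg) auto
    then show ?thesis using b1 b2 by simp
  qed
  have c: "(\<Sum>i\<in>A. (norm (h i))\<^sup>2) \<le> (\<Sum>i<n. (norm (h i))\<^sup>2)"
    using A1 by (intro sum_mono2) auto
  have c2: "3 * real s * eta\<^sup>2 * (\<Sum>i\<in>A. (norm (h i))\<^sup>2) \<le> 3 * real s * eta\<^sup>2 * (\<Sum>i<n. (norm (h i))\<^sup>2)"
    using c by (intro mult_left_mono) auto
  show ?thesis unfolding X using pw a b3 c2 by linarith
qed



lemma sigma_sets_Int2:
  assumes "A \<subseteq> Pow \<Omega>" "a \<in> sigma_sets \<Omega> A" "b \<in> sigma_sets \<Omega> A"
  shows "a \<inter> b \<in> sigma_sets \<Omega> A"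
proof -
  interpret sigma_algebra \<Omega> "sigma_sets \<Omega> A" using assms(1) by (rule sigma_algebra_sigma_sets)
  show ?thesis using assms(2,3) by (rule Int)
qed

lemma (in prob_space) indep_three:
  assumes GS: "GS \<subseteq> Pow (space M)" and GE: "GE \<subseteq> Pow (space M)" and GR: "GR \<subseteq> Pow (space M)"
    and i1: "indep_set (sigma_sets (space M) (GS \<union> GE)) (sigma_sets (space M) GR)"
    and i2: "indep_set (sigma_sets (space M) GS) (sigma_sets (space M) GE)"
  shows "indep_set (sigma_sets (space M) GS) (sigma_sets (space M) (GE \<union> GR))"
proof -
  let ?\<Omega> = "space M"
  let ?SS = "sigma_sets ?\<Omega> GS" and ?SE = "sigma_sets ?\<Omega> GE" and ?SR = "sigma_sets ?\<Omega> GR"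
  let ?SSE = "sigma_sets ?\<Omega> (GS \<union> GE)"
  define Pi where "Pi = {b \<inter> c | b c. b \<in> ?SE \<and> c \<in> ?SR}"
  have SS_SSE: "?SS \<subseteq> ?SSE" by (rule sigma_sets_subseteq) auto
  have SE_SSE: "?SE \<subseteq> ?SSE" by (rule sigma_sets_subseteq) auto
  have GSE: "GS \<union> GE \<subseteq> Pow ?\<Omega>" using GS GE by auto
  have ev1: "?SSE \<subseteq> events" using indep_setD_ev1[OF i1] .
  have ev2: "?SR \<subseteq> events" using indep_setD_ev2[OF i1] .
  have evS: "?SS \<subseteq> events" using SS_SSE ev1 by auto
  have evE: "?SE \<subseteq> events" using SE_SSE ev1 by auto
  have evPi: "Pi \<subseteq> events" unfolding Pi_def using evE ev2 by auto
  have ind_Pi: "indep_set ?SS Pi"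
  proof (rule indep_setI[OF evS evPi])
    fix a x assume a: "a \<in> ?SS" and x: "x \<in> Pi"
    then obtain b c where x: "x = b \<inter> c" and b: "b \<in> ?SE" and c: "c \<in> ?SR" unfolding Pi_def by auto
    have ab: "a \<inter> b \<in> ?SSE" using sigma_sets_Int2[OF GSE] a b SS_SSE SE_SSE by auto
    have "prob (a \<inter> x) = prob ((a \<inter> b) \<inter> c)" unfolding x by (simp add: Int_assoc)
    also have "\<dots> = prob (a \<inter> b) * prob c" using indep_setD[OF i1 ab c] .
    also have "\<dots> = prob a * prob b * prob c" using indep_setD[OF i2 a b] by simp
    also have "prob b * prob c = prob (b \<inter> c)" using indep_setD[OF i1 _ c, of b] b SE_SSE by auto
    then have "prob a * prob b * prob c = prob a * prob (b \<inter> c)" by (simp add: mult.assoc)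
    finally show "prob (a \<inter> x) = prob a * prob x" unfolding x .
  qed
  have IS1: "Int_stable ?SS" by (rule Int_stableI) (rule sigma_sets_Int2[OF GS])
  have IS2: "Int_stable Pi"
  proof (rule Int_stableI)
    fix x y assume "x \<in> Pi" "y \<in> Pi"
    then obtain b1 c1 b2 c2 where "x = b1 \<inter> c1" "y = b2 \<inter> c2" "b1 \<in> ?SE" "b2 \<in> ?SE" "c1 \<in> ?SR" "c2 \<in> ?SR"
      unfolding Pi_def by auto
    moreover have "x \<inter> y = (b1 \<inter> b2) \<inter> (c1 \<inter> c2)" using calculation by auto
    moreover have "b1 \<inter> b2 \<in> ?SE" using sigma_sets_Int2[OF GE] calculation by simp
    moreover have "c1 \<inter> c2 \<in> ?SR" using sigma_sets_Int2[OF GR] calculation by simp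
    ultimately show "x \<inter> y \<in> Pi" unfolding Pi_def by (intro CollectI exI conjI) (assumption+)
  qed
  have "indep_sets (\<lambda>i. sigma_sets ?\<Omega> (case_bool ?SS Pi i)) UNIV"
  proof (rule indep_sets_sigma)
    show "indep_sets (case_bool ?SS Pi) UNIV" using ind_Pi unfolding indep_set_def .
    fix i :: bool show "Int_stable (case_bool ?SS Pi i)" using IS1 IS2 by (cases i) simp_all
  qed
  then have ind2: "indep_set (sigma_sets ?\<Omega> ?SS) (sigma_sets ?\<Omega> Pi)"
    unfolding indep_set_def
  proof (rule indep_sets_cong[THEN iffD1, rotated 2])
    fix i :: bool show "sigma_sets ?\<Omega> (case_bool ?SS Pi i) = case_bool (sigma_sets ?\<Omega> ?SS) (sigma_sets ?\<Omega> Pi) i"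
      by (cases i) simp_all
  qed simp
  have sub1: "?SS \<subseteq> sigma_sets ?\<Omega> ?SS" by auto
  have sub2: "sigma_sets ?\<Omega> (GE \<union> GR) \<subseteq> sigma_sets ?\<Omega> Pi"
  proof (rule sigma_sets_mono, safe)
    fix g assume "g \<in> GE"
    then have "g = g \<inter> ?\<Omega>" "g \<in> ?SE" "?\<Omega> \<in> ?SR" using GE by (auto intro: sigma_sets_top)
    then have "g \<in> Pi" unfolding Pi_def by blast
    then show "g \<in> sigma_sets ?\<Omega> Pi" by auto
  next
    fix g assume "g \<in> GR"
    then have "g = ?\<Omega> \<inter> g" "g \<in> ?SR" "?\<Omega> \<in> ?SE" using GR by (auto intro: sigma_sets_top)
    then have "g \<in> Pi" unfolding Pi_def by blast
    then show "g \<in> sigma_sets ?\<Omega> Pi" by auto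
  qed
  have "sigma_sets ?\<Omega> ?SS \<subseteq> events" "sigma_sets ?\<Omega> Pi \<subseteq> events"
    and pr: "\<And>a b. a \<in> sigma_sets ?\<Omega> ?SS \<Longrightarrow> b \<in> sigma_sets ?\<Omega> Pi \<Longrightarrow> prob (a \<inter> b) = prob a * prob b"
    using ind2 unfolding indep_sets2_eq by auto
  then show ?thesis unfolding indep_sets2_eq using sub1 sub2 by (meson subset_iff)
qed

lemma (in prob_space) indep_integral:
  fixes X Y :: "'a \<Rightarrow> real"
  assumes G1: "G1 \<subseteq> sets M" and G2: "G2 \<subseteq> sets M"
    and ind: "indep_set (sigma_sets (space M) G1) (sigma_sets (space M) G2)"
    and X: "X \<in> borel_measurable (sigma (space M) G1)" and Y: "Y \<in> borel_measurable (sigma (space M) G2)"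
    and iX: "integrable M X" and iY: "integrable M Y"
  shows "(\<integral>\<omega>. X \<omega> * Y \<omega> \<partial>M) = (\<integral>\<omega>. X \<omega> \<partial>M) * (\<integral>\<omega>. Y \<omega> \<partial>M)"
proof (rule indep_var_lebesgue_integral[OF _ iX iY])
  have P1: "G1 \<subseteq> Pow (space M)" and P2: "G2 \<subseteq> Pow (space M)" using G1 G2 sets.space_closed[of M] by auto
  have sX: "sigma_sets (space M) {X -` A \<inter> space M |A. A \<in> sets borel} \<subseteq> sigma_sets (space M) G1"
  proof (rule sigma_sets_mono, safe)
    fix A :: "real set" assume "A \<in> sets borel"
    then have "X -` A \<inter> space (sigma (space M) G1) \<in> sets (sigma (space M) G1)" using X by (rule measurable_sets[rotated])
    then show "X -` A \<inter> space M \<in> sigma_sets (space M) G1" using P1 by (simp add: sets_measure_of space_measure_of_conv)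
  qed
  have sY: "sigma_sets (space M) {Y -` A \<inter> space M |A. A \<in> sets borel} \<subseteq> sigma_sets (space M) G2"
  proof (rule sigma_sets_mono, safe)
    fix A :: "real set" assume "A \<in> sets borel"
    then have "Y -` A \<inter> space (sigma (space M) G2) \<in> sets (sigma (space M) G2)" using Y by (rule measurable_sets[rotated])
    then show "Y -` A \<inter> space M \<in> sigma_sets (space M) G2" using P2 by (simp add: sets_measure_of space_measure_of_conv)
  qed
  have sub1: "subalgebra M (sigma (space M) G1)" unfolding subalgebra_def using P1 sets.sigma_sets_subset[OF G1]
    by (simp add: sets_measure_of space_measure_of_conv)
  have sub2: "subalgebra M (sigma (space M) G2)" unfolding subalgebra_def using P2 sets.sigma_sets_subset[OF G2]
    by (simp add: sets_measure_of space_measure_of_conv)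
  show "indep_var borel X borel Y"
    unfolding indep_var_eq
  proof (intro conjI)
    show "random_variable borel X" by (rule measurable_from_subalg[OF sub1 X])
    show "random_variable borel Y" by (rule measurable_from_subalg[OF sub2 Y])
    have "sigma_sets (space M) G1 \<subseteq> events" "sigma_sets (space M) G2 \<subseteq> events"
      and pr: "\<And>a b. a \<in> sigma_sets (space M) G1 \<Longrightarrow> b \<in> sigma_sets (space M) G2 \<Longrightarrow> prob (a \<inter> b) = prob a * prob b"
      using ind unfolding indep_sets2_eq by auto
    then show "indep_set (sigma_sets (space M) {X -` A \<inter> space M |A. A \<in> sets borel})
       (sigma_sets (space M) {Y -` A \<inter> space M |A. A \<in> sets borel})"
      unfolding indep_sets2_eq using sX sY by (meson subset_iff)
  qed
qed



lemma grad_borel: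
  fixes F :: "'v::euclidean_space \<Rightarrow> real" and g :: "'v \<Rightarrow> 'v"
  assumes d: "\<And>x. (F has_derivative (\<lambda>h. g x \<bullet> h)) (at x)"
  shows "g \<in> borel_measurable borel"
proof -
  have contF: "continuous_on UNIV F"
    using d has_derivative_continuous continuous_at_imp_continuous_on by blast
  then have Fm: "F \<in> borel_measurable borel" by (rule borel_measurable_continuous_onI)
  have comp: "(\<lambda>x. g x \<bullet> b) \<in> borel_measurable borel" for b
  proof (rule borel_measurable_LIMSEQ_real)
    let ?c = "\<lambda>k. inverse (real (Suc k))"
    show "(\<lambda>x. (F (x + ?c k *\<^sub>R b) - F x) / ?c k) \<in> borel_measurable borel" for k
    proof -
      have "continuous_on UNIV (\<lambda>x. (F (x + ?c k *\<^sub>R b) - F x) / ?c k)"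
        by (intro continuous_intros continuous_on_compose2[OF contF]) auto
      then show ?thesis by (rule borel_measurable_continuous_onI)
    qed
    fix x :: 'v
    let ?phi = "\<lambda>r::real. F (x + r *\<^sub>R b)"
    have d1: "((\<lambda>r::real. x + r *\<^sub>R b) has_derivative (\<lambda>r. r *\<^sub>R b)) (at 0)"
      by (auto intro!: derivative_eq_intros)
    have "((F \<circ> (\<lambda>r::real. x + r *\<^sub>R b)) has_derivative ((\<lambda>h. g x \<bullet> h) \<circ> (\<lambda>r. r *\<^sub>R b))) (at 0)"
      by (rule diff_chain_at[OF d1]) (use d[of x] in simp)
    moreover have "((\<lambda>h. g x \<bullet> h) \<circ> (\<lambda>r. r *\<^sub>R b)) = (*) (g x \<bullet> b)"
      by (auto simp: fun_eq_iff)
    ultimately have "(?phi has_field_derivative (g x \<bullet> b)) (at 0)"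
      unfolding has_field_derivative_def by (simp add: o_def)
    then have lim: "((\<lambda>y. (?phi y - ?phi 0) / (y - 0)) \<longlongrightarrow> g x \<bullet> b) (at 0)"
      by (simp add: has_field_derivative_iff)
    have seq: "filterlim ?c (at (0::real)) sequentially"
      unfolding filterlim_at using LIMSEQ_inverse_real_of_nat by auto
    have "((\<lambda>k. (?phi (?c k) - ?phi 0) / (?c k - 0)) \<longlongrightarrow> g x \<bullet> b) sequentially"
      by (rule filterlim_compose[OF lim seq])
    then show "(\<lambda>k. (F (x + ?c k *\<^sub>R b) - F x) / ?c k) \<longlonglongrightarrow> g x \<bullet> b" by simp
  qed
  have "g = (\<lambda>x. \<Sum>b\<in>Basis. (g x \<bullet> b) *\<^sub>R b)" by (simp add: euclidean_representation)
  also have "\<dots> \<in> borel_measurable borel"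
    using comp by (intro borel_measurable_sum borel_measurable_scaleR) auto
  finally show ?thesis .
qed



lemma qpoint_meas:
  fixes g :: "'v::euclidean_space \<Rightarrow> 'v"
  assumes g: "g \<in> borel_measurable borel"
    and z: "\<And>q. 1 \<le> q \<Longrightarrow> (\<lambda>\<omega>. z q \<omega>) \<in> borel_measurable N"
    and x: "x \<in> borel_measurable N"
  shows "(\<lambda>\<omega>. qpoint g (\<lambda>q. z q \<omega>) eta (x \<omega>) m) \<in> borel_measurable N"
proof (induction m)
  case 0 then show ?case using x by simp
next
  case (Suc m)
  have zm: "(\<lambda>\<omega>. z (Suc m) \<omega>) \<in> borel_measurable N" using z by simp
  have "(\<lambda>\<omega>. g (qpoint g (\<lambda>q. z q \<omega>) eta (x \<omega>) m)) \<in> borel_measurable N"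
    using measurable_compose[OF Suc g] .
  then show ?case using Suc zm by simp
qed

lemma hchk_meas:
  fixes grad :: "nat \<Rightarrow> 'v::euclidean_space \<Rightarrow> 'v"
  assumes g: "grad i \<in> borel_measurable borel"
    and z: "\<And>q. 1 \<le> q \<Longrightarrow> (\<lambda>\<omega>. xi t i q \<omega>) \<in> borel_measurable N"
    and x: "(\<lambda>\<omega>. ws \<omega> i) \<in> borel_measurable N"
    and Em: "E t i \<in> N \<rightarrow>\<^sub>M count_space UNIV"
    and al: "alpha t i \<in> borel_measurable N"
  shows "(\<lambda>\<omega>. hchk_from grad xi E alpha K eta t (ws \<omega>) \<omega> i) \<in> borel_measurable N"
proof -
  have ht: "(\<lambda>\<omega>. htil (grad i) (\<lambda>q. xi t i q \<omega>) eta (ws \<omega> i) q) \<in> borel_measurable N" if "1 \<le> q" for q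
  proof -
    have "(\<lambda>\<omega>. grad i (qpoint (grad i) (\<lambda>q. xi t i q \<omega>) eta (ws \<omega> i) (q - 1))) \<in> borel_measurable N"
      using measurable_compose[OF qpoint_meas[where z="xi t i", OF g z x] g] .
    then show ?thesis unfolding htil_def using z[OF that] by simp
  qed
  have Eset: "{\<omega> \<in> space N. P (E t i \<omega>)} \<in> sets N" for P
  proof -
    have "E t i -` {k. P k} \<inter> space N \<in> sets N" using Em by (rule measurable_sets) simp
    then show ?thesis by (simp add: vimage_def Int_def conj_commute)
  qed
  have sumeq: "(\<Sum>q\<in>{1..min (E t i \<omega>) K}. htil (grad i) (\<lambda>q. xi t i q \<omega>) eta (ws \<omega> i) q)
     = (\<Sum>q\<in>{1..K}. if q \<le> E t i \<omega> then htil (grad i) (\<lambda>q. xi t i q \<omega>) eta (ws \<omega> i) q else 0)" for \<omega>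
  proof -
    have e: "{1..K} \<inter> {q. q \<le> E t i \<omega>} = {1..min (E t i \<omega>) K}" by auto
    have "(\<Sum>q\<in>{1..K}. if q \<le> E t i \<omega> then htil (grad i) (\<lambda>q. xi t i q \<omega>) eta (ws \<omega> i) q else 0)
      = (\<Sum>q\<in>{1..K} \<inter> {q. q \<le> E t i \<omega>}. htil (grad i) (\<lambda>q. xi t i q \<omega>) eta (ws \<omega> i) q)"
      by (simp add: sum.If_cases)
    then show ?thesis unfolding e by simp
  qed
  have sm: "(\<lambda>\<omega>. \<Sum>q\<in>{1..K}. if q \<le> E t i \<omega> then htil (grad i) (\<lambda>q. xi t i q \<omega>) eta (ws \<omega> i) q else 0) \<in> borel_measurable N"
  proof (rule borel_measurable_sum)
    fix q assume "q \<in> {1..K}"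
    then show "(\<lambda>\<omega>. if q \<le> E t i \<omega> then htil (grad i) (\<lambda>q. xi t i q \<omega>) eta (ws \<omega> i) q else 0) \<in> borel_measurable N"
      using ht[of q] Eset[of "\<lambda>k. q \<le> k"]
      by (intro measurable_If) auto
  qed
  have "(\<lambda>\<omega>. if 0 < E t i \<omega> then inverse (alpha t i \<omega>) *\<^sub>R
        (\<Sum>q\<in>{1..K}. if q \<le> E t i \<omega> then htil (grad i) (\<lambda>q. xi t i q \<omega>) eta (ws \<omega> i) q else 0) else 0) \<in> borel_measurable N"
    using sm al Eset[of "\<lambda>k. 0 < k"] by (intro measurable_If borel_measurable_scaleR borel_measurable_inverse) auto
  then show ?thesis unfolding hchk_from_def sumeq .
qed

lemma sumR_meas:
  fixes g :: "nat \<Rightarrow> 'a \<Rightarrow> 'v::euclidean_space"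
  assumes R: "\<And>\<omega>. \<omega> \<in> space N \<Longrightarrow> R \<omega> \<in> Good n s"
    and Rm: "\<And>A. A \<in> Good n s \<Longrightarrow> {\<omega> \<in> space N. R \<omega> = A} \<in> sets N"
    and g: "\<And>i. i < n \<Longrightarrow> g i \<in> borel_measurable N"
  shows "(\<lambda>\<omega>. \<Sum>i\<in>R \<omega>. g i \<omega>) \<in> borel_measurable N"
proof -
  have "(\<lambda>\<omega>. \<Sum>A\<in>Good n s. indicator {\<omega> \<in> space N. R \<omega> = A} \<omega> *\<^sub>R (\<Sum>i\<in>A. g i \<omega>)) \<in> borel_measurable N"
  proof (rule borel_measurable_sum)
    fix A assume A: "A \<in> Good n s"
    then have "(\<lambda>\<omega>. \<Sum>i\<in>A. g i \<omega>) \<in> borel_measurable N"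
      using g unfolding Good_def by (intro borel_measurable_sum) auto
    then show "(\<lambda>\<omega>. indicator {\<omega> \<in> space N. R \<omega> = A} \<omega> *\<^sub>R (\<Sum>i\<in>A. g i \<omega>)) \<in> borel_measurable N"
      using Rm[OF A] by (intro borel_measurable_scaleR borel_measurable_indicator)
  qed
  moreover have "(\<Sum>A\<in>Good n s. indicator {\<omega> \<in> space N. R \<omega> = A} \<omega> *\<^sub>R (\<Sum>i\<in>A. g i \<omega>)) = (\<Sum>i\<in>R \<omega>. g i \<omega>)"
    if "\<omega> \<in> space N" for \<omega>
  proof -
    have "(\<Sum>A\<in>Good n s. indicator {\<omega> \<in> space N. R \<omega> = A} \<omega> *\<^sub>R (\<Sum>i\<in>A. g i \<omega>))
        = (\<Sum>A\<in>Good n s. if A = R \<omega> then (\<Sum>i\<in>A. g i \<omega>) else 0)"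
      using that by (intro sum.cong) (auto simp: indicator_def)
    also have "\<dots> = (\<Sum>i\<in>R \<omega>. g i \<omega>)" using R[OF that] finite_Good by (simp add: sum.delta')
    finally show ?thesis .
  qed
  ultimately show ?thesis by (rule measurable_cong[THEN iffD1, rotated])
qed

lemma memR_meas:
  assumes R: "\<And>\<omega>. \<omega> \<in> space N \<Longrightarrow> R \<omega> \<in> Good n s"
    and Rm: "\<And>A. A \<in> Good n s \<Longrightarrow> {\<omega> \<in> space N. R \<omega> = A} \<in> sets N"
  shows "{\<omega> \<in> space N. i \<in> R \<omega>} \<in> sets N"
proof -
  have "{\<omega> \<in> space N. i \<in> R \<omega>} = (\<Union>A\<in>{A \<in> Good n s. i \<in> A}. {\<omega> \<in> space N. R \<omega> = A})"
    using R by auto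
  also have "\<dots> \<in> sets N" using Rm finite_Good by (intro sets.finite_UN) auto
  finally show ?thesis .
qed

lemma Z_meas:
  fixes X :: "'a \<Rightarrow> 'v::euclidean_space \<times> (nat \<Rightarrow> 'v)" and H :: "'a \<Rightarrow> nat \<Rightarrow> 'v"
  assumes X1: "(\<lambda>\<omega>. fst (X \<omega>)) \<in> borel_measurable N"
    and X2: "\<And>i. i < n \<Longrightarrow> (\<lambda>\<omega>. snd (X \<omega>) i) \<in> borel_measurable N"
    and H: "\<And>i. i < n \<Longrightarrow> (\<lambda>\<omega>. H \<omega> i) \<in> borel_measurable N"
    and A: "A \<subseteq> {..<n}"
  shows "(\<lambda>\<omega>. PhiOf n (upd s eta A (X \<omega>) (H \<omega>))) \<in> borel_measurable N"
proof -
  have fin: "finite A" using A finite_subset by blast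
  define wn where "wn = (\<lambda>\<omega>. (1 / (real s + 1)) *\<^sub>R (fst (X \<omega>) + (\<Sum>i\<in>A. snd (X \<omega>) i - eta *\<^sub>R H \<omega> i)))"
  have wnm: "wn \<in> borel_measurable N" unfolding wn_def
    using X1 X2 H A by (intro borel_measurable_scaleR borel_measurable_add borel_measurable_sum borel_measurable_diff borel_measurable_const) auto
  have zm: "(\<lambda>\<omega>. if i \<in> A then wn \<omega> else snd (X \<omega>) i) \<in> borel_measurable N" if "i < n" for i
    using wnm X2[OF that] by (cases "i \<in> A") auto
  define mu where "mu = (\<lambda>\<omega>. (1 / (real n + 1)) *\<^sub>R (wn \<omega> + (\<Sum>i<n. if i \<in> A then wn \<omega> else snd (X \<omega>) i)))"
  have mum: "mu \<in> borel_measurable N" unfolding mu_def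
    using wnm zm by (intro borel_measurable_scaleR borel_measurable_add borel_measurable_sum borel_measurable_const) auto
  have "(\<lambda>\<omega>. (norm (wn \<omega> - mu \<omega>))\<^sup>2 + (\<Sum>i<n. (norm ((if i \<in> A then wn \<omega> else snd (X \<omega>) i) - mu \<omega>))\<^sup>2)) \<in> borel_measurable N"
    using wnm mum zm by (intro borel_measurable_add borel_measurable_sum borel_measurable_power borel_measurable_norm borel_measurable_diff) auto
  moreover have "PhiOf n (upd s eta A (X \<omega>) (H \<omega>)) = (norm (wn \<omega> - mu \<omega>))\<^sup>2 + (\<Sum>i<n. (norm ((if i \<in> A then wn \<omega> else snd (X \<omega>) i) - mu \<omega>))\<^sup>2)" for \<omega>
    unfolding PhiOf_def upd_def Let_def wn_def mu_def by simp
  ultimately show ?thesis by simp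
qed



locale fav = prob_space M for M :: "'a measure" +
  fixes n s K :: nat and eta :: real and stoch :: bool
    and f :: "nat \<Rightarrow> 'v::euclidean_space \<Rightarrow> real" and grad :: "nat \<Rightarrow> 'v \<Rightarrow> 'v"
    and w0 :: 'v
    and S :: "nat \<Rightarrow> 'a \<Rightarrow> nat set"
    and E :: "nat \<Rightarrow> nat \<Rightarrow> 'a \<Rightarrow> nat"
    and xi :: "nat \<Rightarrow> nat \<Rightarrow> nat \<Rightarrow> 'a \<Rightarrow> 'v"
  assumes n: "1 \<le> n" and s: "1 \<le> s" "s \<le> n" and K: "1 \<le> K" and eta: "0 < eta"
    and grad: "\<And>i x. i < n \<Longrightarrow> (f i has_derivative (\<lambda>h. grad i x \<bullet> h)) (at x)"
    and S_meas: "\<And>t. 1 \<le> t \<Longrightarrow> S t \<in> M \<rightarrow>\<^sub>M count_space UNIV"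
    and E_meas: "\<And>t i. 1 \<le> t \<Longrightarrow> i < n \<Longrightarrow> E t i \<in> M \<rightarrow>\<^sub>M count_space UNIV"
    and xi_meas: "\<And>t i q. 1 \<le> t \<Longrightarrow> i < n \<Longrightarrow> 1 \<le> q \<Longrightarrow> xi t i q \<in> borel_measurable M"
    and S_unif: "\<And>t A. 1 \<le> t \<Longrightarrow> A \<subseteq> {..<n} \<Longrightarrow> card A = s \<Longrightarrow>
          measure M {\<omega>\<in>space M. S t \<omega> = A} = 1 / real (n choose s)"
    and indep_SE_rest: "\<And>t. 1 \<le> t \<Longrightarrow> prob_space.indep_set M
          (sigma_sets (space M) (ev_S M S {t} \<union> ev_E M E {t} {..<n}))
          (sigma_sets (space M) (past_ev M n S E xi (t - 1) \<union> ev_xi M xi {t} {..<n} {1..}))"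
    and indep_S_E: "\<And>t. 1 \<le> t \<Longrightarrow> prob_space.indep_set M
          (sigma_sets (space M) (ev_S M S {t}))
          (sigma_sets (space M) (ev_E M E {t} {..<n}))"
    and int_Phi: "\<And>t. integrable M
          (fav_Phi n s K eta grad w0 S E xi (fav_alpha M stoch K E) t)"
    and int_h: "\<And>t i. 1 \<le> t \<Longrightarrow> i < n \<Longrightarrow> integrable M
          (\<lambda>\<omega>. (norm (fav_hchk s K eta grad w0 S E xi (fav_alpha M stoch K E) t i \<omega>))\<^sup>2)"
begin

definition "alpha = fav_alpha M stoch K E"
definition "S' \<tau> \<omega> = (if S \<tau> \<omega> \<in> Good n s then S \<tau> \<omega> else {..<s})"
definition "st \<tau> \<omega> = fav_state s K eta grad w0 S E xi alpha \<tau> \<omega>"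
definition "st' \<tau> \<omega> = fav_state s K eta grad w0 S' E xi alpha \<tau> \<omega>"
definition "GG t = past_ev M n S E xi t \<union> ev_E M E {Suc t} {..<n} \<union> ev_xi M xi {Suc t} {..<n} {1..}"
definition "NN t = sigma (space M) (GG t)"
definition "H' t \<omega> i = hchk_from grad xi E alpha K eta (Suc t) (snd (st' t \<omega>)) \<omega> i"

lemma GG_sets: "GG t \<subseteq> sets M"
proof -
  have "ev_S M S {1..t} \<subseteq> sets M"
    unfolding ev_S_def using S_meas by (auto intro!: measurable_sets)
  moreover have "ev_E M E T {..<n} \<subseteq> sets M" if "\<forall>\<tau>\<in>T. 1 \<le> \<tau>" for T
    unfolding ev_E_def using E_meas that by (auto intro!: measurable_sets)
  moreover have "ev_xi M xi T {..<n} {1..} \<subseteq> sets M" if "\<forall>\<tau>\<in>T. 1 \<le> \<tau>" for T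
    unfolding ev_xi_def using xi_meas that by (auto intro!: measurable_sets)
  ultimately show ?thesis unfolding GG_def past_ev_def by auto
qed

lemma GG_Pow: "GG t \<subseteq> Pow (space M)"
  using GG_sets sets.space_closed by blast

lemma space_NN[simp]: "space (NN t) = space M"
  unfolding NN_def using GG_Pow by (simp add: space_measure_of_conv)

lemma sets_NN: "sets (NN t) = sigma_sets (space M) (GG t)"
  unfolding NN_def using GG_Pow by (simp add: sets_measure_of)

lemma GG_NN: "A \<in> GG t \<Longrightarrow> A \<in> sets (NN t)"
  unfolding sets_NN by auto

lemma subalg_NN: "subalgebra M (NN t)"
  unfolding subalgebra_def sets_NN using sets.sigma_sets_subset[OF GG_sets] by simp

lemma NN_to_M: "g \<in> borel_measurable (NN t) \<Longrightarrow> g \<in> borel_measurable M"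
  by (rule measurable_from_subalg[OF subalg_NN])

lemma S_NN: "\<tau> \<in> {1..t} \<Longrightarrow> S \<tau> -` B \<inter> space M \<in> sets (NN t)"
  by (rule GG_NN) (auto simp: GG_def past_ev_def ev_S_def)

lemma E_NN: "\<tau> \<in> {1..Suc t} \<Longrightarrow> i < n \<Longrightarrow> E \<tau> i \<in> NN t \<rightarrow>\<^sub>M count_space UNIV"
proof (rule measurableI)
  fix B :: "nat set" assume "\<tau> \<in> {1..Suc t}" "i < n"
  then have "E \<tau> i -` B \<inter> space M \<in> GG t"
  proof (cases "\<tau> = Suc t")
    case True
    then have "E \<tau> i -` B \<inter> space M \<in> ev_E M E {Suc t} {..<n}" unfolding ev_E_def using \<open>i < n\<close> by blast
    then show ?thesis unfolding GG_def by blast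
  next
    case False
    then have "\<tau> \<in> {1..t}" using \<open>\<tau> \<in> {1..Suc t}\<close> by auto
    then have "E \<tau> i -` B \<inter> space M \<in> ev_E M E {1..t} {..<n}" unfolding ev_E_def using \<open>i < n\<close> by blast
    then show ?thesis unfolding GG_def past_ev_def by blast
  qed
  then show "E \<tau> i -` B \<inter> space (NN t) \<in> sets (NN t)" by (simp add: GG_NN)
qed simp

lemma xi_NN: "\<tau> \<in> {1..Suc t} \<Longrightarrow> i < n \<Longrightarrow> 1 \<le> q \<Longrightarrow> xi \<tau> i q \<in> borel_measurable (NN t)"
proof (rule measurableI)
  fix B :: "'v set" assume "\<tau> \<in> {1..Suc t}" "i < n" "1 \<le> q" "B \<in> sets borel"
  then have "xi \<tau> i q -` B \<inter> space M \<in> GG t"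
  proof (cases "\<tau> = Suc t")
    case True
    then have "xi \<tau> i q -` B \<inter> space M \<in> ev_xi M xi {Suc t} {..<n} {1..}" unfolding ev_xi_def using \<open>i < n\<close> \<open>1 \<le> q\<close> \<open>B \<in> sets borel\<close> by blast
    then show ?thesis unfolding GG_def by blast
  next
    case False
    then have "\<tau> \<in> {1..t}" using \<open>\<tau> \<in> {1..Suc t}\<close> by auto
    then have "xi \<tau> i q -` B \<inter> space M \<in> ev_xi M xi {1..t} {..<n} {1..}" unfolding ev_xi_def using \<open>i < n\<close> \<open>1 \<le> q\<close> \<open>B \<in> sets borel\<close> by blast
    then show ?thesis unfolding GG_def past_ev_def by blast
  qed
  then show "xi \<tau> i q -` B \<inter> space (NN t) \<in> sets (NN t)" by (simp add: GG_NN)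
qed simp

lemma alpha_NN: "\<tau> \<in> {1..Suc t} \<Longrightarrow> i < n \<Longrightarrow> alpha \<tau> i \<in> borel_measurable (NN t)"
proof -
  assume a: "\<tau> \<in> {1..Suc t}" "i < n"
  have "(\<lambda>\<omega>. real (min (E \<tau> i \<omega>) K)) \<in> borel_measurable (NN t)"
    using measurable_compose[OF E_NN[OF a], of "\<lambda>k. real (min k K)" borel] by simp
  then show ?thesis unfolding alpha_def fav_alpha_def[abs_def] by (cases stoch) auto
qed

lemma grad_meas: "i < n \<Longrightarrow> grad i \<in> borel_measurable borel"
  by (rule grad_borel[of "f i"]) (rule grad)

lemma Good_s: "{..<s} \<in> Good n s"
  unfolding Good_def using s by auto

lemma S'_Good: "S' \<tau> \<omega> \<in> Good n s"
  unfolding S'_def using Good_s by auto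

lemma S'_NN: "\<tau> \<in> {1..t} \<Longrightarrow> A \<in> Good n s \<Longrightarrow> {\<omega> \<in> space (NN t). S' \<tau> \<omega> = A} \<in> sets (NN t)"
proof -
  assume a: "\<tau> \<in> {1..t}" "A \<in> Good n s"
  have "{\<omega> \<in> space (NN t). S' \<tau> \<omega> = A} = S \<tau> -` ({A} \<union> (if A = {..<s} then - Good n s else {})) \<inter> space M"
    using a(2) by (auto simp: S'_def split: if_splits)
  then show ?thesis using S_NN[OF a(1)] by simp
qed

lemma st'_meas:
  "\<tau> \<le> t \<Longrightarrow> (\<lambda>\<omega>. fst (st' \<tau> \<omega>)) \<in> borel_measurable (NN t) \<and> (\<forall>i. (\<lambda>\<omega>. snd (st' \<tau> \<omega>) i) \<in> borel_measurable (NN t))"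
proof (induction \<tau>)
  case 0 then show ?case by (simp add: st'_def)
next
  case (Suc \<tau>)
  then have IH1: "(\<lambda>\<omega>. fst (st' \<tau> \<omega>)) \<in> borel_measurable (NN t)"
    and IH2: "\<And>i. (\<lambda>\<omega>. snd (st' \<tau> \<omega>) i) \<in> borel_measurable (NN t)" by auto
  have r: "Suc \<tau> \<in> {1..t}" "Suc \<tau> \<in> {1..Suc t}" using Suc by auto
  define hh where "hh i \<omega> = hchk_from grad xi E alpha K eta (Suc \<tau>) (snd (st' \<tau> \<omega>)) \<omega> i" for i \<omega>
  have hhm: "hh i \<in> borel_measurable (NN t)" if "i < n" for i
    unfolding hh_def[abs_def]
    by (rule hchk_meas[where grad=grad and i=i and xi=xi and t="Suc \<tau>" and E=E and alpha=alpha and N="NN t" and ws="\<lambda>\<omega>. snd (st' \<tau> \<omega>)",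
          OF grad_meas[OF that] xi_NN[OF r(2) that] IH2 E_NN[OF r(2) that] alpha_NN[OF r(2) that]])
  define wn where "wn \<omega> = (1 / (real s + 1)) *\<^sub>R (fst (st' \<tau> \<omega>) + (\<Sum>i\<in>S' (Suc \<tau>) \<omega>. snd (st' \<tau> \<omega>) i - eta *\<^sub>R hh i \<omega>))" for \<omega>
  have eq: "st' (Suc \<tau>) \<omega> = (wn \<omega>, \<lambda>i. if i \<in> S' (Suc \<tau>) \<omega> then wn \<omega> else snd (st' \<tau> \<omega>) i)" for \<omega>
    unfolding st'_def wn_def hh_def by (simp add: Let_def)
  have sm: "(\<lambda>\<omega>. \<Sum>i\<in>S' (Suc \<tau>) \<omega>. snd (st' \<tau> \<omega>) i - eta *\<^sub>R hh i \<omega>) \<in> borel_measurable (NN t)"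
    by (rule sumR_meas[where n=n and s=s]) (use S'_Good S'_NN[OF r(1)] IH2 hhm in auto)
  have wnm: "wn \<in> borel_measurable (NN t)" unfolding wn_def[abs_def] using IH1 sm by measurable
  have memm: "{\<omega> \<in> space (NN t). i \<in> S' (Suc \<tau>) \<omega>} \<in> sets (NN t)" for i
    by (rule memR_meas[where n=n and s=s]) (use S'_Good S'_NN[OF r(1)] in auto)
  show ?case unfolding eq using wnm IH2 memm by (auto intro!: measurable_If)
qed

lemma H'_meas: "i < n \<Longrightarrow> (\<lambda>\<omega>. H' t \<omega> i) \<in> borel_measurable (NN t)"
proof -
  assume i: "i < n"
  have r: "Suc t \<in> {1..Suc t}" by simp
  have x: "(\<lambda>\<omega>. snd (st' t \<omega>) i) \<in> borel_measurable (NN t)" using st'_meas[of t t] by auto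
  show ?thesis unfolding H'_def
    by (rule hchk_meas[where grad=grad and i=i and xi=xi and t="Suc t" and E=E and alpha=alpha and N="NN t" and ws="\<lambda>\<omega>. snd (st' t \<omega>)", OF grad_meas[OF i] xi_NN[OF r i] x E_NN[OF r i] alpha_NN[OF r i]])
qed

lemma Z_NN: "A \<in> Good n s \<Longrightarrow> (\<lambda>\<omega>. PhiOf n (upd s eta A (st' t \<omega>) (H' t \<omega>))) \<in> borel_measurable (NN t)"
  by (rule Z_meas) (use st'_meas[of t t] H'_meas in \<open>auto simp: Good_def\<close>)

lemma PhiOf_st'_NN: "(\<lambda>\<omega>. PhiOf n (st' t \<omega>)) \<in> borel_measurable (NN t)"
proof -
  have X1: "(\<lambda>\<omega>. fst (st' t \<omega>)) \<in> borel_measurable (NN t)" and X2: "\<And>i. (\<lambda>\<omega>. snd (st' t \<omega>) i) \<in> borel_measurable (NN t)"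
    using st'_meas[of t t] by auto
  define mu where "mu = (\<lambda>\<omega>. (1 / (real n + 1)) *\<^sub>R (fst (st' t \<omega>) + (\<Sum>i<n. snd (st' t \<omega>) i)))"
  have mum: "mu \<in> borel_measurable (NN t)" unfolding mu_def
    using X1 X2 by (intro borel_measurable_scaleR borel_measurable_add borel_measurable_sum borel_measurable_const) auto
  have "(\<lambda>\<omega>. (norm (fst (st' t \<omega>) - mu \<omega>))\<^sup>2 + (\<Sum>i<n. (norm (snd (st' t \<omega>) i - mu \<omega>))\<^sup>2)) \<in> borel_measurable (NN t)"
    using X1 X2 mum by (intro borel_measurable_add borel_measurable_sum borel_measurable_power borel_measurable_norm borel_measurable_diff) auto
  moreover have "PhiOf n (st' t \<omega>) = (norm (fst (st' t \<omega>) - mu \<omega>))\<^sup>2 + (\<Sum>i<n. (norm (snd (st' t \<omega>) i - mu \<omega>))\<^sup>2)" for \<omega>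
    unfolding PhiOf_def Let_def mu_def by simp
  ultimately show ?thesis by simp
qed


lemma S_event: "1 \<le> \<tau> \<Longrightarrow> {\<omega> \<in> space M. S \<tau> \<omega> = A} \<in> events"
proof -
  assume t: "1 \<le> \<tau>"
  have "S \<tau> -` {A} \<inter> space M \<in> events" by (rule measurable_sets[OF S_meas[OF t]]) simp
  moreover have "S \<tau> -` {A} \<inter> space M = {\<omega> \<in> space M. S \<tau> \<omega> = A}" by auto
  ultimately show ?thesis by simp
qed

lemma prob_S: "1 \<le> \<tau> \<Longrightarrow> A \<in> Good n s \<Longrightarrow> prob {\<omega> \<in> space M. S \<tau> \<omega> = A} = 1 / real (n choose s)"
  using S_unif unfolding Good_def by auto

lemma prob_Good: "1 \<le> \<tau> \<Longrightarrow> prob {\<omega> \<in> space M. S \<tau> \<omega> \<in> Good n s} = 1"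
proof -
  assume t: "1 \<le> \<tau>"
  have eq: "{\<omega> \<in> space M. S \<tau> \<omega> \<in> Good n s} = (\<Union>A\<in>Good n s. {\<omega> \<in> space M. S \<tau> \<omega> = A})" by auto
  have "prob (\<Union>A\<in>Good n s. {\<omega> \<in> space M. S \<tau> \<omega> = A}) = (\<Sum>A\<in>Good n s. prob {\<omega> \<in> space M. S \<tau> \<omega> = A})"
    using finite_Good S_event[OF t] by (intro measure_finite_Union) (auto simp: disjoint_family_on_def)
  also have "\<dots> = (\<Sum>A\<in>Good n s. 1 / real (n choose s))" using prob_S[OF t] by simp
  also have "\<dots> = 1" using card_Good[of n s] s by simp
  finally show ?thesis unfolding eq .
qed

lemma AE_good: "AE \<omega> in M. \<forall>\<tau>\<in>{1..Suc t}. S \<tau> \<omega> \<in> Good n s"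
proof (rule AE_finite_allI)
  fix \<tau> assume "\<tau> \<in> {1..Suc t}"
  then have "AE \<omega> in M. \<omega> \<in> {\<omega> \<in> space M. S \<tau> \<omega> \<in> Good n s}" by (intro AE_prob_1 prob_Good) auto
  then show "AE \<omega> in M. S \<tau> \<omega> \<in> Good n s" by auto
qed simp

lemma st_eq: "(\<forall>\<tau>'\<in>{1..\<tau>}. S \<tau>' \<omega> \<in> Good n s) \<Longrightarrow> st \<tau> \<omega> = st' \<tau> \<omega>"
proof (induction \<tau>)
  case 0 then show ?case by (simp add: st_def st'_def)
next
  case (Suc \<tau>)
  then have IH: "fav_state s K eta grad w0 S E xi alpha \<tau> \<omega> = fav_state s K eta grad w0 S' E xi alpha \<tau> \<omega>"
    unfolding st_def st'_def by auto
  have "S' (Suc \<tau>) \<omega> = S (Suc \<tau>) \<omega>" using Suc.prems S'_def by auto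
  then show ?case unfolding st_def st'_def by (simp add: IH Let_def)
qed

definition "BB t A = {\<omega> \<in> space M. S (Suc t) \<omega> = A}"
definition "ZZ t A \<omega> = PhiOf n (upd s eta A (st' t \<omega>) (H' t \<omega>))"

lemma good_eqs:
  assumes g: "\<forall>\<tau>\<in>{1..Suc t}. S \<tau> \<omega> \<in> Good n s" and \<omega>: "\<omega> \<in> space M"
  shows "fav_Phi n s K eta grad w0 S E xi alpha t \<omega> = PhiOf n (st' t \<omega>)"
    and "\<And>i. fav_hchk s K eta grad w0 S E xi alpha (t + 1) i \<omega> = H' t \<omega> i"
    and "fav_Phi n s K eta grad w0 S E xi alpha (t + 1) \<omega> = (\<Sum>A\<in>Good n s. indicator (BB t A) \<omega> * ZZ t A \<omega>)"
proof -
  have stt: "st t \<omega> = st' t \<omega>" using g by (intro st_eq) auto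
  have PhiOf_st: "fav_Phi n s K eta grad w0 S E xi alpha \<tau> \<omega> = PhiOf n (st \<tau> \<omega>)" for \<tau>
    unfolding fav_Phi_def fav_mu_def PhiOf_def Let_def st_def by simp
  show "fav_Phi n s K eta grad w0 S E xi alpha t \<omega> = PhiOf n (st' t \<omega>)"
    unfolding PhiOf_st stt ..
  show "fav_hchk s K eta grad w0 S E xi alpha (t + 1) i \<omega> = H' t \<omega> i" for i
    unfolding fav_hchk_def H'_def using stt by (simp add: st_def)
  have stS: "st (Suc t) \<omega> = upd s eta (S (Suc t) \<omega>) (st t \<omega>) (\<lambda>i. hchk_from grad xi E alpha K eta (Suc t) (snd (st t \<omega>)) \<omega> i)"
    unfolding st_def upd_def by (simp add: Let_def)
  have "fav_Phi n s K eta grad w0 S E xi alpha (t + 1) \<omega> = ZZ t (S (Suc t) \<omega>) \<omega>"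
    unfolding PhiOf_st Suc_eq_plus1[symmetric] stS ZZ_def stt H'_def ..
  also have "\<dots> = (\<Sum>A\<in>Good n s. if A = S (Suc t) \<omega> then ZZ t A \<omega> else 0)"
    using g finite_Good by (simp add: sum.delta')
  also have "\<dots> = (\<Sum>A\<in>Good n s. indicator (BB t A) \<omega> * ZZ t A \<omega>)"
    using \<omega> by (intro sum.cong) (auto simp: BB_def indicator_def)
  finally show "fav_Phi n s K eta grad w0 S E xi alpha (t + 1) \<omega> = (\<Sum>A\<in>Good n s. indicator (BB t A) \<omega> * ZZ t A \<omega>)" .
qed


lemma AE_eqs:
  shows "AE \<omega> in M. fav_Phi n s K eta grad w0 S E xi (fav_alpha M stoch K E) t \<omega> = PhiOf n (st' t \<omega>)"
    and "AE \<omega> in M. fav_hchk s K eta grad w0 S E xi (fav_alpha M stoch K E) (t + 1) i \<omega> = H' t \<omega> i"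
    and "AE \<omega> in M. fav_Phi n s K eta grad w0 S E xi (fav_alpha M stoch K E) (t + 1) \<omega> = (\<Sum>A\<in>Good n s. indicator (BB t A) \<omega> * ZZ t A \<omega>)"
proof -
  show "AE \<omega> in M. fav_Phi n s K eta grad w0 S E xi (fav_alpha M stoch K E) t \<omega> = PhiOf n (st' t \<omega>)"
    by (rule AE_mp[OF AE_good[of t]], rule AE_I2, intro impI, rule good_eqs(1)[unfolded alpha_def])
  show "AE \<omega> in M. fav_hchk s K eta grad w0 S E xi (fav_alpha M stoch K E) (t + 1) i \<omega> = H' t \<omega> i"
    by (rule AE_mp[OF AE_good[of t]], rule AE_I2, intro impI, rule good_eqs(2)[unfolded alpha_def])
  show "AE \<omega> in M. fav_Phi n s K eta grad w0 S E xi (fav_alpha M stoch K E) (t + 1) \<omega> = (\<Sum>A\<in>Good n s. indicator (BB t A) \<omega> * ZZ t A \<omega>)"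
    by (rule AE_mp[OF AE_good[of t]], rule AE_I2, intro impI, rule good_eqs(3)[unfolded alpha_def])
qed

lemma PhiOf_M: "(\<lambda>\<omega>. PhiOf n (st' t \<omega>)) \<in> borel_measurable M"
  by (rule NN_to_M[OF PhiOf_st'_NN])

lemma Hsq_M: "i < n \<Longrightarrow> (\<lambda>\<omega>. (norm (H' t \<omega> i))\<^sup>2) \<in> borel_measurable M"
  by (rule NN_to_M[of _ t]) (use H'_meas[of i t] in \<open>auto intro!: borel_measurable_power borel_measurable_norm\<close>)

lemma ZZ_NN: "A \<in> Good n s \<Longrightarrow> ZZ t A \<in> borel_measurable (NN t)"
  unfolding ZZ_def[abs_def] by (rule Z_NN)

lemma iPhi: "integrable M (\<lambda>\<omega>. PhiOf n (st' t \<omega>))"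
  by (rule integrable_cong_AE_imp[OF int_Phi[of t] PhiOf_M AE_eqs(1)])

lemma iH: "i < n \<Longrightarrow> integrable M (\<lambda>\<omega>. (norm (H' t \<omega> i))\<^sup>2)"
proof -
  assume i: "i < n"
  have "AE \<omega> in M. (norm (fav_hchk s K eta grad w0 S E xi (fav_alpha M stoch K E) (t + 1) i \<omega>))\<^sup>2 = (norm (H' t \<omega> i))\<^sup>2"
    by (rule AE_mp[OF AE_eqs(2)[of t i]], rule AE_I2) simp
  moreover have "integrable M (\<lambda>\<omega>. (norm (fav_hchk s K eta grad w0 S E xi (fav_alpha M stoch K E) (t + 1) i \<omega>))\<^sup>2)"
    using int_h[of "t + 1" i] i by simp
  ultimately show ?thesis using integrable_cong_AE_imp[OF _ Hsq_M[OF i]] by blast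
qed

lemma iZ: "A \<in> Good n s \<Longrightarrow> integrable M (ZZ t A)"
proof -
  assume A: "A \<in> Good n s"
  let ?F = "\<lambda>\<omega>. 2 * PhiOf n (st' t \<omega>) + 3 * real s * eta\<^sup>2 * (\<Sum>i<n. (norm (H' t \<omega> i))\<^sup>2)"
  have iF: "integrable M ?F" using iPhi[of t] iH[of _ t] by (intro Bochner_Integration.integrable_add Bochner_Integration.integrable_mult_right Bochner_Integration.integrable_sum) auto
  show ?thesis
  proof (rule Bochner_Integration.integrable_bound[OF iF NN_to_M[OF ZZ_NN[OF A]]])
    show "AE \<omega> in M. norm (ZZ t A \<omega>) \<le> norm (?F \<omega>)"
    proof (intro AE_I2)
      fix \<omega>
      have "ZZ t A \<omega> \<le> ?F \<omega>" unfolding ZZ_def by (rule Z_bound[OF A s(1)])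
      moreover have "0 \<le> ZZ t A \<omega>" unfolding ZZ_def by (rule PhiOf_nonneg)
      ultimately show "norm (ZZ t A \<omega>) \<le> norm (?F \<omega>)" by simp
    qed
  qed
qed

lemma indSG: "indep_set (sigma_sets (space M) (ev_S M S {Suc t})) (sigma_sets (space M) (GG t))"
proof -
  have eq: "GG t = ev_E M E {Suc t} {..<n} \<union> (past_ev M n S E xi t \<union> ev_xi M xi {Suc t} {..<n} {1..})"
    unfolding GG_def by auto
  have P: "ev_S M S {Suc t} \<subseteq> Pow (space M)" "ev_E M E {Suc t} {..<n} \<subseteq> Pow (space M)"
    "past_ev M n S E xi t \<union> ev_xi M xi {Suc t} {..<n} {1..} \<subseteq> Pow (space M)"
    using GG_Pow[of t] unfolding GG_def by (auto simp: ev_S_def ev_E_def)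
  show ?thesis unfolding eq
    by (rule indep_three[OF P]) (use indep_SE_rest[of "Suc t"] indep_S_E[of "Suc t"] in simp_all)
qed

lemma indep_BZ: "A \<in> Good n s \<Longrightarrow> (\<integral>\<omega>. indicator (BB t A) \<omega> * ZZ t A \<omega> \<partial>M) = prob (BB t A) * (\<integral>\<omega>. ZZ t A \<omega> \<partial>M)"
proof -
  assume A: "A \<in> Good n s"
  have G1: "ev_S M S {Suc t} \<subseteq> sets M"
    unfolding ev_S_def using S_meas by (auto intro!: measurable_sets)
  have BBG: "BB t A \<in> ev_S M S {Suc t}"
  proof -
    have "BB t A = S (Suc t) -` {A} \<inter> space M" unfolding BB_def by auto
    then show ?thesis unfolding ev_S_def by blast
  qed
  have BBs: "BB t A \<in> events" using BBG G1 by auto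
  have X: "indicator (BB t A) \<in> borel_measurable (sigma (space M) (ev_S M S {Suc t}))"
  proof (rule borel_measurable_indicator)
    have "ev_S M S {Suc t} \<subseteq> Pow (space M)" using G1 sets.space_closed by blast
    then show "BB t A \<in> sets (sigma (space M) (ev_S M S {Suc t}))" using BBG by (simp add: sets_measure_of)
  qed
  have Y: "ZZ t A \<in> borel_measurable (sigma (space M) (GG t))" using ZZ_NN[OF A] unfolding NN_def .
  have "(\<integral>\<omega>. indicator (BB t A) \<omega> * ZZ t A \<omega> \<partial>M) = (\<integral>\<omega>. indicator (BB t A) \<omega> \<partial>M) * (\<integral>\<omega>. ZZ t A \<omega> \<partial>M)"
  proof (rule indep_integral[OF G1 GG_sets indSG X Y])
    show "integrable M (indicator (BB t A) :: 'a \<Rightarrow> real)"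
      by (rule Bochner_Integration.integrable_real_indicator[OF BBs]) (simp add: less_top[symmetric])
  qed (rule iZ[OF A])
  also have "(\<integral>\<omega>. indicator (BB t A) \<omega> \<partial>M) = prob (BB t A)"
    using BBs by (simp add: Int_absorb2 sets.sets_into_space)
  finally show ?thesis .
qed

lemma main:
  "(\<integral>\<omega>. fav_Phi n s K eta grad w0 S E xi (fav_alpha M stoch K E) (t + 1) \<omega> \<partial>M)
     \<le> (1 - (1 / real n) * (real s * (real n - real s)) / (2 * (real n + 1) * (real s + 1)))
          * (\<integral>\<omega>. fav_Phi n s K eta grad w0 S E xi (fav_alpha M stoch K E) t \<omega> \<partial>M)
       + 3 * (real s)\<^sup>2 / real n * eta\<^sup>2 *
          (\<Sum>i<n. \<integral>\<omega>. (norm (fav_hchk s K eta grad w0 S E xi (fav_alpha M stoch K E) (t + 1) i \<omega>))\<^sup>2 \<partial>M)"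
proof -
  define C where "C = real (n choose s)"
  define kap where "kap = (1 / real n) * (real s * (real n - real s)) / (2 * (real n + 1) * (real s + 1))"
  define c where "c = 3 * (real s)\<^sup>2 / real n * eta\<^sup>2"
  have BBs: "BB t A \<in> events" for A unfolding BB_def using S_event[of "Suc t" A] by simp
  have iBZ: "integrable M (\<lambda>\<omega>. indicator (BB t A) \<omega> * ZZ t A \<omega>)" if "A \<in> Good n s" for A
    using integrable_real_mult_indicator[OF BBs iZ[OF that]] by (simp add: mult.commute)
  have mBZ: "(\<lambda>\<omega>. \<Sum>A\<in>Good n s. indicator (BB t A) \<omega> * ZZ t A \<omega>) \<in> borel_measurable M"
    using iBZ by (intro borel_measurable_integrable integrable_sum) auto
  have "(\<integral>\<omega>. fav_Phi n s K eta grad w0 S E xi (fav_alpha M stoch K E) (t + 1) \<omega> \<partial>M)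
      = (\<integral>\<omega>. (\<Sum>A\<in>Good n s. indicator (BB t A) \<omega> * ZZ t A \<omega>) \<partial>M)"
    by (rule integral_cong_AE[OF borel_measurable_integrable[OF int_Phi] mBZ AE_eqs(3)])
  also have "\<dots> = (\<Sum>A\<in>Good n s. \<integral>\<omega>. indicator (BB t A) \<omega> * ZZ t A \<omega> \<partial>M)"
    by (rule Bochner_Integration.integral_sum) (rule iBZ)
  also have "\<dots> = (\<Sum>A\<in>Good n s. (1 / C) * (\<integral>\<omega>. ZZ t A \<omega> \<partial>M))"
    using indep_BZ prob_S[of "Suc t"] unfolding BB_def C_def by simp
  also have "\<dots> = (\<integral>\<omega>. (1 / C) * (\<Sum>A\<in>Good n s. ZZ t A \<omega>) \<partial>M)"
    using iZ by (simp add: integral_sum sum_distrib_left)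
  also have "\<dots> \<le> (\<integral>\<omega>. (1 - kap) * PhiOf n (st' t \<omega>) + c * (\<Sum>i<n. (norm (H' t \<omega> i))\<^sup>2) \<partial>M)"
  proof (rule integral_mono)
    show "integrable M (\<lambda>\<omega>. (1 / C) * (\<Sum>A\<in>Good n s. ZZ t A \<omega>))" using iZ by (intro Bochner_Integration.integrable_mult_right Bochner_Integration.integrable_sum) auto
    show "integrable M (\<lambda>\<omega>. (1 - kap) * PhiOf n (st' t \<omega>) + c * (\<Sum>i<n. (norm (H' t \<omega> i))\<^sup>2))"
      using iPhi[of t] iH[of _ t] by (intro Bochner_Integration.integrable_add Bochner_Integration.integrable_mult_right Bochner_Integration.integrable_sum) auto
    fix \<omega>
    show "(1 / C) * (\<Sum>A\<in>Good n s. ZZ t A \<omega>) \<le> (1 - kap) * PhiOf n (st' t \<omega>) + c * (\<Sum>i<n. (norm (H' t \<omega> i))\<^sup>2)"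
      using avg_bound[OF n s, of eta "fst (st' t \<omega>)" "snd (st' t \<omega>)" "H' t \<omega>"]
      unfolding ZZ_def C_def kap_def c_def by simp
  qed
  also have "\<dots> = (1 - kap) * (\<integral>\<omega>. PhiOf n (st' t \<omega>) \<partial>M) + c * (\<Sum>i<n. \<integral>\<omega>. (norm (H' t \<omega> i))\<^sup>2 \<partial>M)"
  proof -
    have i1: "integrable M (\<lambda>\<omega>. (1 - kap) * PhiOf n (st' t \<omega>))"
      using iPhi[of t] by (rule Bochner_Integration.integrable_mult_right)
    have i2: "integrable M (\<lambda>\<omega>. c * (\<Sum>i<n. (norm (H' t \<omega> i))\<^sup>2))"
      using iH[of _ t] by (intro Bochner_Integration.integrable_mult_right Bochner_Integration.integrable_sum) auto
    have "(\<integral>\<omega>. (1 - kap) * PhiOf n (st' t \<omega>) + c * (\<Sum>i<n. (norm (H' t \<omega> i))\<^sup>2) \<partial>M)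
       = (\<integral>\<omega>. (1 - kap) * PhiOf n (st' t \<omega>) \<partial>M) + (\<integral>\<omega>. c * (\<Sum>i<n. (norm (H' t \<omega> i))\<^sup>2) \<partial>M)"
      by (rule Bochner_Integration.integral_add[OF i1 i2])
    also have "(\<integral>\<omega>. c * (\<Sum>i<n. (norm (H' t \<omega> i))\<^sup>2) \<partial>M) = c * (\<Sum>i<n. \<integral>\<omega>. (norm (H' t \<omega> i))\<^sup>2 \<partial>M)"
      unfolding integral_mult_right_zero using iH[of _ t] by (subst Bochner_Integration.integral_sum) auto
    finally show ?thesis unfolding integral_mult_right_zero .
  qed
  also have "(\<integral>\<omega>. PhiOf n (st' t \<omega>) \<partial>M) = (\<integral>\<omega>. fav_Phi n s K eta grad w0 S E xi (fav_alpha M stoch K E) t \<omega> \<partial>M)"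
    by (rule integral_cong_AE[OF PhiOf_M borel_measurable_integrable[OF int_Phi]]) (rule AE_mp[OF AE_eqs(1)[of t]], rule AE_I2, simp)
  also have "(\<Sum>i<n. \<integral>\<omega>. (norm (H' t \<omega> i))\<^sup>2 \<partial>M)
     = (\<Sum>i<n. \<integral>\<omega>. (norm (fav_hchk s K eta grad w0 S E xi (fav_alpha M stoch K E) (t + 1) i \<omega>))\<^sup>2 \<partial>M)"
  proof (rule sum.cong[OF refl])
    fix i assume "i \<in> {..<n}"
    then have i: "i < n" by simp
    show "(\<integral>\<omega>. (norm (H' t \<omega> i))\<^sup>2 \<partial>M) = (\<integral>\<omega>. (norm (fav_hchk s K eta grad w0 S E xi (fav_alpha M stoch K E) (t + 1) i \<omega>))\<^sup>2 \<partial>M)"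
    proof (rule integral_cong_AE[OF Hsq_M[OF i]])
      show "(\<lambda>\<omega>. (norm (fav_hchk s K eta grad w0 S E xi (fav_alpha M stoch K E) (t + 1) i \<omega>))\<^sup>2) \<in> borel_measurable M"
        using int_h[of "t + 1" i] i by (intro borel_measurable_integrable) simp
      show "AE \<omega> in M. (norm (H' t \<omega> i))\<^sup>2 = (norm (fav_hchk s K eta grad w0 S E xi (fav_alpha M stoch K E) (t + 1) i \<omega>))\<^sup>2"
        by (rule AE_mp[OF AE_eqs(2)[of t i]], rule AE_I2) simp
    qed
  qed
  finally show ?thesis unfolding kap_def c_def .
qed

end


theorem mainTheorem4:
  fixes M :: "'a measure"
    and n s K :: nat and eta :: real and stoch :: bool
    and f :: "nat \<Rightarrow> 'v::euclidean_space \<Rightarrow> real" and grad :: "nat \<Rightarrow> 'v \<Rightarrow> 'v"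
    and w0 :: 'v
    and S :: "nat \<Rightarrow> 'a \<Rightarrow> nat set"
    and E :: "nat \<Rightarrow> nat \<Rightarrow> 'a \<Rightarrow> nat"
    and xi :: "nat \<Rightarrow> nat \<Rightarrow> nat \<Rightarrow> 'a \<Rightarrow> 'v"
    and t :: nat
  assumes P: "prob_space M"
    and n: "1 \<le> n" and s: "1 \<le> s" "s \<le> n" and K: "1 \<le> K" and eta: "0 < eta"
    and grad: "\<And>i x. i < n \<Longrightarrow> (f i has_derivative (\<lambda>h. grad i x \<bullet> h)) (at x)"
    and S_meas: "\<And>t. 1 \<le> t \<Longrightarrow> S t \<in> M \<rightarrow>\<^sub>M count_space UNIV"
    and E_meas: "\<And>t i. 1 \<le> t \<Longrightarrow> i < n \<Longrightarrow> E t i \<in> M \<rightarrow>\<^sub>M count_space UNIV"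
    and xi_meas: "\<And>t i q. 1 \<le> t \<Longrightarrow> i < n \<Longrightarrow> 1 \<le> q \<Longrightarrow> xi t i q \<in> borel_measurable M"
    and xi_int: "\<And>t i q b. 1 \<le> t \<Longrightarrow> i < n \<Longrightarrow> 1 \<le> q \<Longrightarrow> b \<in> Basis \<Longrightarrow>
                   integrable M (\<lambda>\<omega>. xi t i q \<omega> \<bullet> b)"
    and xi_mean0: "\<And>t i q b. 1 \<le> t \<Longrightarrow> i < n \<Longrightarrow> 1 \<le> q \<Longrightarrow> b \<in> Basis \<Longrightarrow>
          AE \<omega> in M. real_cond_exp M
             (sigma (space M) (past_ev M n S E xi (t - 1) \<union> ev_xi M xi {t} {i} {1..<q}))
             (\<lambda>\<omega>. xi t i q \<omega> \<bullet> b) \<omega> = 0"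
    and E_pos: "\<And>t i. 1 \<le> t \<Longrightarrow> i < n \<Longrightarrow> 0 < measure M {\<omega>\<in>space M. 0 < E t i \<omega>}"
    and S_unif: "\<And>t A. 1 \<le> t \<Longrightarrow> A \<subseteq> {..<n} \<Longrightarrow> card A = s \<Longrightarrow>
          measure M {\<omega>\<in>space M. S t \<omega> = A} = 1 / real (n choose s)"
    and indep_SE_rest: "\<And>t. 1 \<le> t \<Longrightarrow> prob_space.indep_set M
          (sigma_sets (space M) (ev_S M S {t} \<union> ev_E M E {t} {..<n}))
          (sigma_sets (space M) (past_ev M n S E xi (t - 1) \<union> ev_xi M xi {t} {..<n} {1..}))"
    and indep_S_E: "\<And>t. 1 \<le> t \<Longrightarrow> prob_space.indep_set M
          (sigma_sets (space M) (ev_S M S {t}))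
          (sigma_sets (space M) (ev_E M E {t} {..<n}))"
    and int_Phi: "\<And>t. integrable M
          (fav_Phi n s K eta grad w0 S E xi (fav_alpha M stoch K E) t)"
    and int_h: "\<And>t i. 1 \<le> t \<Longrightarrow> i < n \<Longrightarrow> integrable M
          (\<lambda>\<omega>. (norm (fav_hchk s K eta grad w0 S E xi (fav_alpha M stoch K E) t i \<omega>))\<^sup>2)"
  shows "(\<integral>\<omega>. fav_Phi n s K eta grad w0 S E xi (fav_alpha M stoch K E) (t + 1) \<omega> \<partial>M)
     \<le> (1 - (1 / real n) * (real s * (real n - real s)) / (2 * (real n + 1) * (real s + 1)))
          * (\<integral>\<omega>. fav_Phi n s K eta grad w0 S E xi (fav_alpha M stoch K E) t \<omega> \<partial>M)
       + 3 * (real s)\<^sup>2 / real n * eta\<^sup>2 *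
          (\<Sum>i<n. \<integral>\<omega>. (norm (fav_hchk s K eta grad w0 S E xi (fav_alpha M stoch K E) (t + 1) i \<omega>))\<^sup>2 \<partial>M)"
  proof -
  have F: "fav M n s K eta stoch f grad w0 S E xi"
  proof (intro fav.intro fav_axioms.intro)
    show "prob_space M" by (rule P)
  qed (fact n s K eta grad S_meas E_meas xi_meas S_unif indep_SE_rest indep_S_E int_Phi int_h)+
  show ?thesis by (rule fav.main[OF F])
qed

end
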